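(* Let $(H,\cdot,1,\Delta,\epsilon,S,\rightharpoonup)$ be a Yetter--Drinfeld post-Hopf algebra, with $\bullet_\rightharpoonup$ and $S_\rightharpoonup$ as in (P6). Then $(H,\cdot,\bullet_\rightharpoonup,1,\Delta,\epsilon,S,S_\rightharpoonup)$ is a Yetter--Drinfeld brace. Moreover, any morphism of Yetter--Drinfeld post-Hopf algebras $f:(H,\rightharpoonup)\to(H',\rightharpoonup')$ is a morphism of Yetter--Drinfeld braces between the associated Yetter--Drinfeld braces, so that this assignment defines a functor $F:\mathcal{YD}\mathrm{PH}(\mathrm{Vec}_\Bbbk)\to\mathcal{YD}\mathrm{Br}(\mathrm{Vec}_\Bbbk)$.
   Context: Conventions: $\Bbbk$ is a field; algebras are associative unital, coalgebras coassociative counital; Sweedler notation $\Delta(c)=c_1\otimes c_2$ (summation omitted), iterated as $c_1\otimes c_2\otimes c_3$ etc.; $H\otimes H$ carries the tensor product coalgebra structure. Definition (Yetter--Drinfeld post-Hopf algebra). A tuple $(H,\cdot,1,\Delta,\epsilon,S,\rightharpoonup)$ where $(H,\cdot,1)$ is an algebra, $(H,\Delta,\epsilon)$ is a coalgebra on the same vector space, $S:H\to H$ is linear with $x_1\cdot S(x_2)=S(x_1)\cdot x_2=\epsilon(x)1$ for all $x$, and $\rightharpoonup:H\otimes H\to H$ is a coalgebra morphism, such that for all $x,y,z\in H$: (P1) $x\rightharpoonup(y\cdot z)=(x_1\rightharpoonup y)\cdot(x_2\rightharpoonup z)$; (P2) $x\rightharpoonup(y\rightharpoonup z)=\big(x_1\cdot(x_2\rightharpoonup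 y)\big)\rightharpoonup z$; (P3) the map $\alpha_\rightharpoonup:H\to\mathrm{End}(H)$, $\alpha_\rightharpoonup(x)(y)=x\rightharpoonup y$, is convolution invertible, i.e. there is $\beta_\rightharpoonup:H\to\mathrm{End}(H)$ with $\alpha_\rightharpoonup(x_1)\circ\beta_\rightharpoonup(x_2)=\beta_\rightharpoonup(x_1)\circ\alpha_\rightharpoonup(x_2)=\epsilon(x)\mathrm{Id}_H$; (P4) $\epsilon(a\cdot b)=\epsilon(a)\epsilon(b)$, $\epsilon(1)=1_\Bbbk$, $\Delta(1)=1\otimes 1$; (P5) $\Delta(x\cdot y)=\Big(x_1\cdot\alpha_\rightharpoonup(x_2)\big(\beta_\rightharpoonup(x_4)(y_1)\big)\Big)\otimes(x_3\cdot y_2)$; (P6) setting $x\bullet_\rightharpoonup y:=x_1\cdot(x_2\rightharpoonup y)$, $S_\rightharpoonup(x):=\beta_\rightharpoonup(x_1)(S(x_2))$ and $x\leftharpoonup y:=\big(S_\rightharpoonup(x_1\rightharpoonup y_1)\bullet_\rightharpoonup x_2\big)\bullet_\rightharpoonup y_2$, one has $\Delta(S_\rightharpoonup(x))=S_\rightharpoonup(x_2)\otimes S_\rightharpoonup(x_1)$ and $(x_1\rightharpoonup y_1)\otimes(x_2\leftharpoonup y_2)=(x_2\rightharpoonup y_2)\otimes(x_1\leftharpoonup y_1)$. A morphism of Yetter--Drinfeld post-Hopf algebras $(H,\rightharpoonup)\to(H',\rightharpoonup')$ is an algebra and coalgebra morphism $g$ with $g(x\rightharpoonup y)=g(x)\rightharpoonup'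 g(y)$; these form the category $\mathcal{YD}\mathrm{PH}(\mathrm{Vec}_\Bbbk)$. Yetter--Drinfeld modules: for a Hopf algebra $A$ with antipode $T$, a left-left Yetter--Drinfeld module is a left $A$-module $(V,\triangleright)$ and left $A$-comodule $\rho(v)=v_{-1}\otimes v_0$ with $\rho(a\triangleright v)=a_1v_{-1}T(a_3)\otimes a_2\triangleright v_0$; these form the braided monoidal category ${}^A_A\mathcal{YD}$ with braiding $\sigma(v\otimes w)=v_{-1}\triangleright w\otimes v_0$. A Hopf monoid in ${}^A_A\mathcal{YD}$ is an object with algebra and coalgebra structure maps in ${}^A_A\mathcal{YD}$, $\epsilon$ multiplicative, $\epsilon(1)=1$, $\Delta(1)=1\otimes1$, $\Delta\circ m=(m\otimes m)(\mathrm{Id}\otimes\sigma\otimes\mathrm{Id})(\Delta\otimes\Delta)$, and an antipode (convolution inverse of the identity). Definition (Yetter--Drinfeld brace). A tuple $(H,\cdot,\bullet,1,\Delta,\epsilon,S,T)$ such that $H^\bullet=(H,\bullet,1,\Delta,\epsilon,T)$ is a Hopf algebra and: (1) $(H,\cdot,1,\Delta,\epsilon,S)$ is a Hopf monoid in ${}^{H^\bullet}_{H^\bullet}\mathcal{YD}$ with action $a\rightharpoonup b:=S(a_1)\cdot(a_2\bullet b)$ and coaction $\mathrm{Ad}_L(a)=a_1\bullet T(a_3)\otimes a_2$; (2) with $a\leftharpoonup b:=T(a_1\rightharpoonup b_1)\bullet a_2\bullet b_2$ one has $(a_1\rightharpoonup b_1)\otimes(a_2\leftharpoonup b_2)=(a_2\rightharpoonup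 b_2)\otimes(a_1\leftharpoonup b_1)$; (3) $a\bullet(b\cdot c)=(a_1\bullet b)\cdot S(a_2)\cdot(a_3\bullet c)$. A morphism of Yetter--Drinfeld braces is a Hopf algebra morphism $f:H^\bullet\to K^\bullet$ with $f(a\cdot_H b)=f(a)\cdot_K f(b)$; these form the category $\mathcal{YD}\mathrm{Br}(\mathrm{Vec}_\Bbbk)$. *)

theory Defs
  imports Complex_Main
begin

text \<open>
A linear map Delta : H -> H (x) H is represented by a function cm :: 'h => ('h * 'h) list,
cm x being a finite list of simple tensors whose sum is Delta(x) (scalars absorbed into the
first tensor factor).  An element of a tensor power of H is identified through the values
of all multilinear forms on it (over a field the dual space separates points).
\<close>

definition sw :: "('h \<Rightarrow> ('h \<times> 'h) list) \<Rightarrow> ('h \<Rightarrow> 'h \<Rightarrow> 'v::comm_monoid_add) \<Rightarrow> 'h \<Rightarrow> 'v" where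
  "sw cm f x = sum_list (map (\<lambda>(a, b). f a b) (cm x))"

definition sw3 :: "('h \<Rightarrow> ('h \<times> 'h) list) \<Rightarrow> ('h \<Rightarrow> 'h \<Rightarrow> 'h \<Rightarrow> 'v::comm_monoid_add) \<Rightarrow> 'h \<Rightarrow> 'v" where
  "sw3 cm g x = sw cm (\<lambda>a b. sw cm (\<lambda>c d. g c d b) a) x"

definition sw4 :: "('h \<Rightarrow> ('h \<times> 'h) list) \<Rightarrow> ('h \<Rightarrow> 'h \<Rightarrow> 'h \<Rightarrow> 'h \<Rightarrow> 'v::comm_monoid_add) \<Rightarrow> 'h \<Rightarrow> 'v" where
  "sw4 cm g x = sw cm (\<lambda>a b. sw3 cm (\<lambda>c d e. g c d e b) a) x"

definition bilin :: "('k::field \<Rightarrow> 'h::ab_group_add \<Rightarrow> 'h) \<Rightarrow> ('k \<Rightarrow> 'c::ab_group_add \<Rightarrow> 'c)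
    \<Rightarrow> ('h \<Rightarrow> 'h \<Rightarrow> 'c) \<Rightarrow> bool" where
  "bilin sc sc2 f \<longleftrightarrow> (\<forall>x. Vector_Spaces.linear sc sc2 (f x)) \<and> (\<forall>y. Vector_Spaces.linear sc sc2 (\<lambda>x. f x y))"

definition trilin :: "('k::field \<Rightarrow> 'h::ab_group_add \<Rightarrow> 'h) \<Rightarrow> ('k \<Rightarrow> 'c::ab_group_add \<Rightarrow> 'c)
    \<Rightarrow> ('h \<Rightarrow> 'h \<Rightarrow> 'h \<Rightarrow> 'c) \<Rightarrow> bool" where
  "trilin sc sc2 f \<longleftrightarrow> (\<forall>x y. Vector_Spaces.linear sc sc2 (f x y)) \<and> (\<forall>x z. Vector_Spaces.linear sc sc2 (\<lambda>y. f x y z))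
     \<and> (\<forall>y z. Vector_Spaces.linear sc sc2 (\<lambda>x. f x y z))"

definition coalg :: "('k::field \<Rightarrow> 'h::ab_group_add \<Rightarrow> 'h) \<Rightarrow> ('h \<Rightarrow> ('h \<times> 'h) list) \<Rightarrow> ('h \<Rightarrow> 'k) \<Rightarrow> bool" where
  "coalg sc cm eps \<longleftrightarrow> Vector_Spaces.vector_space sc \<and> Vector_Spaces.linear sc (*) eps
   \<and> (\<forall>f. bilin sc (*) f \<longrightarrow> (\<forall>x y. sw cm f (x + y) = sw cm f x + sw cm f y)
                            \<and> (\<forall>c x. sw cm f (sc c x) = c * sw cm f x))
   \<and> (\<forall>f. trilin sc (*) f \<longrightarrow> (\<forall>x. sw cm (\<lambda>a b. sw cm (\<lambda>c d. f c d b) a) x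
                                   = sw cm (\<lambda>a b. sw cm (\<lambda>c d. f a c d) b) x))
   \<and> (\<forall>x. sw cm (\<lambda>a b. sc (eps a) b) x = x)
   \<and> (\<forall>x. sw cm (\<lambda>a b. sc (eps b) a) x = x)"

definition alg :: "('k::field \<Rightarrow> 'h::ab_group_add \<Rightarrow> 'h) \<Rightarrow> ('h \<Rightarrow> 'h \<Rightarrow> 'h) \<Rightarrow> 'h \<Rightarrow> bool" where
  "alg sc mul one \<longleftrightarrow> Vector_Spaces.vector_space sc \<and> bilin sc sc mul
   \<and> (\<forall>x y z. mul (mul x y) z = mul x (mul y z)) \<and> (\<forall>x. mul one x = x \<and> mul x one = x)"

definition pbul :: "('h \<Rightarrow> 'h \<Rightarrow> 'h::ab_group_add) \<Rightarrow> ('h \<Rightarrow> ('h \<times> 'h) list) \<Rightarrow> ('h \<Rightarrow> 'h \<Rightarrow> 'h) \<Rightarrow> 'h \<Rightarrow> 'h \<Rightarrow> 'h" where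
  "pbul mul cm act x y = sw cm (\<lambda>x1 x2. mul x1 (act x2 y)) x"

definition pS :: "('h \<Rightarrow> ('h \<times> 'h) list) \<Rightarrow> ('h \<Rightarrow> 'h) \<Rightarrow> ('h \<Rightarrow> 'h \<Rightarrow> 'h::ab_group_add) \<Rightarrow> 'h \<Rightarrow> 'h" where
  "pS cm S beta x = sw cm (\<lambda>x1 x2. beta x1 (S x2)) x"

definition plh :: "('h \<Rightarrow> 'h \<Rightarrow> 'h::ab_group_add) \<Rightarrow> ('h \<Rightarrow> ('h \<times> 'h) list) \<Rightarrow> ('h \<Rightarrow> 'h)
    \<Rightarrow> ('h \<Rightarrow> 'h \<Rightarrow> 'h) \<Rightarrow> ('h \<Rightarrow> 'h \<Rightarrow> 'h) \<Rightarrow> 'h \<Rightarrow> 'h \<Rightarrow> 'h" where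
  "plh mul cm S act beta x y =
     sw cm (\<lambda>x1 x2. sw cm (\<lambda>y1 y2.
        pbul mul cm act (pbul mul cm act (pS cm S beta (act x1 y1)) x2) y2) y) x"

text \<open>The YD post-Hopf algebra axioms, where beta is the (unique) convolution inverse of
  alpha required by (P3).\<close>
definition ydph :: "('k::field \<Rightarrow> 'h::ab_group_add \<Rightarrow> 'h) \<Rightarrow> ('h \<Rightarrow> 'h \<Rightarrow> 'h) \<Rightarrow> 'h
    \<Rightarrow> ('h \<Rightarrow> ('h \<times> 'h) list) \<Rightarrow> ('h \<Rightarrow> 'k) \<Rightarrow> ('h \<Rightarrow> 'h) \<Rightarrow> ('h \<Rightarrow> 'h \<Rightarrow> 'h) \<Rightarrow> ('h \<Rightarrow> 'h \<Rightarrow> 'h) \<Rightarrow> bool" where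
  "ydph sc mul one cm eps S act beta \<longleftrightarrow>
     alg sc mul one \<and> coalg sc cm eps
   \<comment> \<open>S linear with x_1 S(x_2) = S(x_1) x_2 = eps(x) 1\<close>
   \<and> Vector_Spaces.linear sc sc S
   \<and> (\<forall>x. sw cm (\<lambda>a b. mul a (S b)) x = sc (eps x) one \<and> sw cm (\<lambda>a b. mul (S a) b) x = sc (eps x) one)
   \<comment> \<open>act : H (x) H -> H linear and a coalgebra morphism\<close>
   \<and> bilin sc sc act
   \<and> (\<forall>f. bilin sc (*) f \<longrightarrow> (\<forall>x y. sw cm f (act x y)
          = sw cm (\<lambda>x1 x2. sw cm (\<lambda>y1 y2. f (act x1 y1) (act x2 y2)) y) x))
   \<and> (\<forall>x y. eps (act x y) = eps x * eps y)
   \<comment> \<open>(P1)\<close>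
   \<and> (\<forall>x y z. act x (mul y z) = sw cm (\<lambda>x1 x2. mul (act x1 y) (act x2 z)) x)
   \<comment> \<open>(P2)\<close>
   \<and> (\<forall>x y z. act x (act y z) = act (sw cm (\<lambda>x1 x2. mul x1 (act x2 y)) x) z)
   \<comment> \<open>(P3): beta : H -> End(H) linear, convolution inverse of alpha\<close>
   \<and> (\<forall>x. Vector_Spaces.linear sc sc (beta x)) \<and> (\<forall>y. Vector_Spaces.linear sc sc (\<lambda>x. beta x y))
   \<and> (\<forall>x y. sw cm (\<lambda>x1 x2. act x1 (beta x2 y)) x = sc (eps x) y)
   \<and> (\<forall>x y. sw cm (\<lambda>x1 x2. beta x1 (act x2 y)) x = sc (eps x) y)
   \<comment> \<open>(P4)\<close>
   \<and> (\<forall>a b. eps (mul a b) = eps a * eps b) \<and> eps one = 1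
   \<and> (\<forall>f. bilin sc (*) f \<longrightarrow> sw cm f one = f one one)
   \<comment> \<open>(P5)\<close>
   \<and> (\<forall>f. bilin sc (*) f \<longrightarrow> (\<forall>x y. sw cm f (mul x y)
        = sw4 cm (\<lambda>x1 x2 x3 x4. sw cm (\<lambda>y1 y2. f (mul x1 (act x2 (beta x4 y1))) (mul x3 y2)) y) x))
   \<comment> \<open>(P6)\<close>
   \<and> (\<forall>f. bilin sc (*) f \<longrightarrow> (\<forall>x. sw cm f (pS cm S beta x)
        = sw cm (\<lambda>x1 x2. f (pS cm S beta x2) (pS cm S beta x1)) x))
   \<and> (\<forall>f. bilin sc (*) f \<longrightarrow> (\<forall>x y.
        sw cm (\<lambda>x1 x2. sw cm (\<lambda>y1 y2. f (act x1 y1) (plh mul cm S act beta x2 y2)) y) x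
      = sw cm (\<lambda>x1 x2. sw cm (\<lambda>y1 y2. f (act x2 y2) (plh mul cm S act beta x1 y1)) y) x))"

definition ydph_mor :: "('k::field \<Rightarrow> 'h::ab_group_add \<Rightarrow> 'h) \<Rightarrow> ('h \<Rightarrow> 'h \<Rightarrow> 'h) \<Rightarrow> 'h
    \<Rightarrow> ('h \<Rightarrow> ('h \<times> 'h) list) \<Rightarrow> ('h \<Rightarrow> 'k) \<Rightarrow> ('h \<Rightarrow> 'h \<Rightarrow> 'h)
    \<Rightarrow> ('k \<Rightarrow> 'g::ab_group_add \<Rightarrow> 'g) \<Rightarrow> ('g \<Rightarrow> 'g \<Rightarrow> 'g) \<Rightarrow> 'g
    \<Rightarrow> ('g \<Rightarrow> ('g \<times> 'g) list) \<Rightarrow> ('g \<Rightarrow> 'k) \<Rightarrow> ('g \<Rightarrow> 'g \<Rightarrow> 'g) \<Rightarrow> ('h \<Rightarrow> 'g) \<Rightarrow> bool" where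
  "ydph_mor sc mul one cm eps act sc' mul' one' cm' eps' act' g \<longleftrightarrow>
     Vector_Spaces.linear sc sc' g
   \<and> (\<forall>x y. g (mul x y) = mul' (g x) (g y)) \<and> g one = one'
   \<and> (\<forall>f. bilin sc' (*) f \<longrightarrow> (\<forall>x. sw cm' f (g x) = sw cm (\<lambda>a b. f (g a) (g b)) x))
   \<and> (\<forall>x. eps' (g x) = eps x)
   \<and> (\<forall>x y. g (act x y) = act' (g x) (g y))"

definition bact :: "('h \<Rightarrow> 'h \<Rightarrow> 'h::ab_group_add) \<Rightarrow> ('h \<Rightarrow> 'h \<Rightarrow> 'h) \<Rightarrow> ('h \<Rightarrow> ('h \<times> 'h) list)
    \<Rightarrow> ('h \<Rightarrow> 'h) \<Rightarrow> 'h \<Rightarrow> 'h \<Rightarrow> 'h" where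
  "bact mul bul cm S a b = sw cm (\<lambda>a1 a2. mul (S a1) (bul a2 b)) a"

definition bcoact :: "('h \<Rightarrow> 'h \<Rightarrow> 'h::ab_group_add) \<Rightarrow> ('h \<Rightarrow> ('h \<times> 'h) list) \<Rightarrow> ('h \<Rightarrow> 'h)
    \<Rightarrow> ('h \<Rightarrow> 'h \<Rightarrow> 'v::comm_monoid_add) \<Rightarrow> 'h \<Rightarrow> 'v" where
  "bcoact bul cm T f b = sw3 cm (\<lambda>b1 b2 b3. f (bul b1 (T b3)) b2) b"

definition blh :: "('h \<Rightarrow> 'h \<Rightarrow> 'h::ab_group_add) \<Rightarrow> ('h \<Rightarrow> 'h \<Rightarrow> 'h) \<Rightarrow> ('h \<Rightarrow> ('h \<times> 'h) list)
    \<Rightarrow> ('h \<Rightarrow> 'h) \<Rightarrow> ('h \<Rightarrow> 'h) \<Rightarrow> 'h \<Rightarrow> 'h \<Rightarrow> 'h" where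
  "blh mul bul cm S T a b =
     sw cm (\<lambda>a1 a2. sw cm (\<lambda>b1 b2. bul (bul (T (bact mul bul cm S a1 b1)) a2) b2) b) a"

definition yd_brace :: "('k::field \<Rightarrow> 'h::ab_group_add \<Rightarrow> 'h) \<Rightarrow> ('h \<Rightarrow> 'h \<Rightarrow> 'h) \<Rightarrow> ('h \<Rightarrow> 'h \<Rightarrow> 'h) \<Rightarrow> 'h
    \<Rightarrow> ('h \<Rightarrow> ('h \<times> 'h) list) \<Rightarrow> ('h \<Rightarrow> 'k) \<Rightarrow> ('h \<Rightarrow> 'h) \<Rightarrow> ('h \<Rightarrow> 'h) \<Rightarrow> bool" where
  "yd_brace sc mul bul one cm eps S T \<longleftrightarrow>
   (let ra = bact mul bul cm S in
   \<comment> \<open>H^\<bullet> = (H, bul, one, cm, eps, T) is a Hopf algebra\<close>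
     alg sc bul one \<and> coalg sc cm eps
   \<and> (\<forall>a b. eps (bul a b) = eps a * eps b) \<and> eps one = 1
   \<and> (\<forall>f. bilin sc (*) f \<longrightarrow> sw cm f one = f one one)
   \<and> (\<forall>f. bilin sc (*) f \<longrightarrow> (\<forall>a b. sw cm f (bul a b)
          = sw cm (\<lambda>a1 a2. sw cm (\<lambda>b1 b2. f (bul a1 b1) (bul a2 b2)) b) a))
   \<and> Vector_Spaces.linear sc sc T
   \<and> (\<forall>x. sw cm (\<lambda>a b. bul a (T b)) x = sc (eps x) one \<and> sw cm (\<lambda>a b. bul (T a) b) x = sc (eps x) one)
   \<comment> \<open>(1) H with the action ra and coaction Ad_L is a left-left YD module over H^\<bullet>\<close>
   \<and> bilin sc sc ra
   \<and> (\<forall>v. ra one v = v) \<and> (\<forall>a b v. ra (bul a b) v = ra a (ra b v))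
   \<and> (\<forall>f. bilin sc (*) f \<longrightarrow> (\<forall>x y. bcoact bul cm T f (x + y) = bcoact bul cm T f x + bcoact bul cm T f y)
                            \<and> (\<forall>c x. bcoact bul cm T f (sc c x) = c * bcoact bul cm T f x))
   \<and> (\<forall>f. trilin sc (*) f \<longrightarrow> (\<forall>v. bcoact bul cm T (\<lambda>h u. sw cm (\<lambda>h1 h2. f h1 h2 u) h) v
                                   = bcoact bul cm T (\<lambda>h u. bcoact bul cm T (\<lambda>h' u'. f h h' u') u) v))
   \<and> (\<forall>v. bcoact bul cm T (\<lambda>h u. sc (eps h) u) v = v)
   \<and> (\<forall>f. bilin sc (*) f \<longrightarrow> (\<forall>a v. bcoact bul cm T f (ra a v)
          = sw3 cm (\<lambda>a1 a2 a3. bcoact bul cm T (\<lambda>h u. f (bul (bul a1 h) (T a3)) (ra a2 u)) v) a))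
   \<comment> \<open>(1) (H, mul, one, cm, eps, S) is a Hopf monoid in the YD category\<close>
   \<and> alg sc mul one
   \<comment> \<open>mul is a morphism of YD modules\<close>
   \<and> (\<forall>a b c. ra a (mul b c) = sw cm (\<lambda>a1 a2. mul (ra a1 b) (ra a2 c)) a)
   \<and> (\<forall>f. bilin sc (*) f \<longrightarrow> (\<forall>b c. bcoact bul cm T f (mul b c)
          = bcoact bul cm T (\<lambda>h u. bcoact bul cm T (\<lambda>h' u'. f (bul h h') (mul u u')) c) b))
   \<comment> \<open>unit is a morphism of YD modules\<close>
   \<and> (\<forall>a. ra a one = sc (eps a) one)
   \<and> (\<forall>f. bilin sc (*) f \<longrightarrow> bcoact bul cm T f one = f one one)
   \<comment> \<open>comultiplication is a morphism of YD modules\<close>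
   \<and> (\<forall>f. bilin sc (*) f \<longrightarrow> (\<forall>a v. sw cm f (ra a v)
          = sw cm (\<lambda>a1 a2. sw cm (\<lambda>v1 v2. f (ra a1 v1) (ra a2 v2)) v) a))
   \<and> (\<forall>f. trilin sc (*) f \<longrightarrow> (\<forall>v. bcoact bul cm T (\<lambda>h w. sw cm (\<lambda>w1 w2. f h w1 w2) w) v
          = sw cm (\<lambda>v1 v2. bcoact bul cm T (\<lambda>h u. bcoact bul cm T (\<lambda>h' u'. f (bul h h') u u') v2) v1) v))
   \<comment> \<open>counit is a morphism of YD modules (k with trivial action and coaction)\<close>
   \<and> (\<forall>a v. eps (ra a v) = eps a * eps v)
   \<and> (\<forall>v. bcoact bul cm T (\<lambda>h w. sc (eps w) h) v = sc (eps v) one)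
   \<comment> \<open>braided bialgebra axioms\<close>
   \<and> (\<forall>a b. eps (mul a b) = eps a * eps b)
   \<and> (\<forall>f. bilin sc (*) f \<longrightarrow> (\<forall>b c. sw cm f (mul b c)
          = sw cm (\<lambda>b1 b2. sw cm (\<lambda>c1 c2.
               bcoact bul cm T (\<lambda>h u. f (mul b1 (ra h c1)) (mul u c2)) b2) c) b))
   \<comment> \<open>antipode S: convolution inverse of the identity\<close>
   \<and> Vector_Spaces.linear sc sc S
   \<and> (\<forall>x. sw cm (\<lambda>a b. mul a (S b)) x = sc (eps x) one \<and> sw cm (\<lambda>a b. mul (S a) b) x = sc (eps x) one)
   \<comment> \<open>(2)\<close>
   \<and> (\<forall>f. bilin sc (*) f \<longrightarrow> (\<forall>a b.
        sw cm (\<lambda>a1 a2. sw cm (\<lambda>b1 b2. f (ra a1 b1) (blh mul bul cm S T a2 b2)) b) a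
      = sw cm (\<lambda>a1 a2. sw cm (\<lambda>b1 b2. f (ra a2 b2) (blh mul bul cm S T a1 b1)) b) a))
   \<comment> \<open>(3)\<close>
   \<and> (\<forall>a b c. bul a (mul b c) = sw3 cm (\<lambda>a1 a2 a3. mul (mul (bul a1 b) (S a2)) (bul a3 c)) a))"

definition brace_mor :: "('k::field \<Rightarrow> 'h::ab_group_add \<Rightarrow> 'h) \<Rightarrow> ('h \<Rightarrow> 'h \<Rightarrow> 'h) \<Rightarrow> ('h \<Rightarrow> 'h \<Rightarrow> 'h) \<Rightarrow> 'h
    \<Rightarrow> ('h \<Rightarrow> ('h \<times> 'h) list) \<Rightarrow> ('h \<Rightarrow> 'k)
    \<Rightarrow> ('k \<Rightarrow> 'g::ab_group_add \<Rightarrow> 'g) \<Rightarrow> ('g \<Rightarrow> 'g \<Rightarrow> 'g) \<Rightarrow> ('g \<Rightarrow> 'g \<Rightarrow> 'g) \<Rightarrow> 'g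
    \<Rightarrow> ('g \<Rightarrow> ('g \<times> 'g) list) \<Rightarrow> ('g \<Rightarrow> 'k) \<Rightarrow> ('h \<Rightarrow> 'g) \<Rightarrow> bool" where
  "brace_mor sc mul bul one cm eps sc' mul' bul' one' cm' eps' g \<longleftrightarrow>
     Vector_Spaces.linear sc sc' g
   \<comment> \<open>Hopf algebra morphism H^\<bullet> -> K^\<bullet>\<close>
   \<and> (\<forall>x y. g (bul x y) = bul' (g x) (g y)) \<and> g one = one'
   \<and> (\<forall>f. bilin sc' (*) f \<longrightarrow> (\<forall>x. sw cm' f (g x) = sw cm (\<lambda>a b. f (g a) (g b)) x))
   \<and> (\<forall>x. eps' (g x) = eps x)
   \<comment> \<open>preserves the dot product\<close>
   \<and> (\<forall>x y. g (mul x y) = mul' (g x) (g y))"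

end

theory Submission
  imports Defs
begin


fun cop :: "('h::zero \<Rightarrow> ('h \<times> 'h) list) \<Rightarrow> nat \<Rightarrow> 'h \<Rightarrow> (nat \<Rightarrow> 'h) list" where
  "cop cm 0 x = [(\<lambda>_. 0)(0 := x)]"
| "cop cm (Suc n) x = concat (map (\<lambda>(a, b). map (\<lambda>l. l(Suc n := b)) (cop cm n a)) (cm x))"

definition Sw :: "('h::zero \<Rightarrow> ('h \<times> 'h) list) \<Rightarrow> nat \<Rightarrow> ((nat \<Rightarrow> 'h) \<Rightarrow> 'v::comm_monoid_add) \<Rightarrow> 'h \<Rightarrow> 'v" where
  "Sw cm n F x = sum_list (map F (cop cm n x))"

definition del :: "nat \<Rightarrow> (nat \<Rightarrow> 'h) \<Rightarrow> nat \<Rightarrow> 'h" where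
  "del i m = (\<lambda>j. if j < i then m j else m (Suc j))"

lemma del_apply[simp]: "del i m j = (if j < i then m j else m (Suc j))"
  by (simp add: del_def)

lemma sum_list_concat_map: "sum_list (concat (map f xs)) = sum_list (map (\<lambda>x. sum_list (f x)) xs)"
  by (induction xs) auto

lemma Sw_0: "Sw cm 0 F x = F ((\<lambda>_. 0)(0 := x))"
  by (simp add: Sw_def)

lemma Sw_Suc: "Sw cm (Suc n) F x = sw cm (\<lambda>a b. Sw cm n (\<lambda>l. F (l(Suc n := b))) a) x"
  by (simp add: Sw_def sw_def map_concat sum_list_concat_map o_def split_def)

lemma Sw_cong: "(\<And>l. l \<in> set (cop cm n x) \<Longrightarrow> F l = G l) \<Longrightarrow> Sw cm n F x = Sw cm n G x"
  unfolding Sw_def by (metis map_cong)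

lemma cop_support: "l \<in> set (cop cm n x) \<Longrightarrow> j > n \<Longrightarrow> l j = 0"
  by (induction n arbitrary: x l) auto

lemma sum_list_swap:
  fixes F :: "'a \<Rightarrow> 'b \<Rightarrow> 'v::comm_monoid_add"
  shows "sum_list (map (\<lambda>a. sum_list (map (\<lambda>b. F a b) ys)) xs)
   = sum_list (map (\<lambda>b. sum_list (map (\<lambda>a. F a b) xs)) ys)"
proof (induction xs)
  case (Cons a xs)
  then show ?case using sum_list_addf[of "\<lambda>b. F a b" _ ys, symmetric] by simp
qed simp

lemma Sw_swap: "Sw cm n (\<lambda>l. Sw cm' m (\<lambda>k. F l k) y) x = Sw cm' m (\<lambda>k. Sw cm n (\<lambda>l. F l k) x) y"
  unfolding Sw_def by (rule sum_list_swap)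

lemma sw_Sw_swap: "sw cm (\<lambda>c d. Sw cm' m (\<lambda>k. F c d k) y) x = Sw cm' m (\<lambda>k. sw cm (\<lambda>c d. F c d k) x) y"
  unfolding Sw_def sw_def using sum_list_swap[of "\<lambda>p k. F (fst p) (snd p) k" "cop cm' m y" "cm x"]
  by (simp add: split_def)

lemma sw_sw_swap: "sw cm (\<lambda>c d. sw cm' (\<lambda>a b. F c d a b) y) x = sw cm' (\<lambda>a b. sw cm (\<lambda>c d. F c d a b) x) y"
  unfolding sw_def using sum_list_swap[of "\<lambda>p q. F (fst p) (snd p) (fst q) (snd q)"]
  by (simp add: split_def)

lemma sw_as_Sw: "sw cm f x = Sw cm 1 (\<lambda>l. f (l 0) (l 1)) x"
  by (simp add: Sw_Suc[of cm 0, simplified] Sw_0)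

lemma sw3_as_Sw: "sw3 cm g x = Sw cm 2 (\<lambda>l. g (l 0) (l 1) (l 2)) x"
  by (simp add: sw3_def numeral_2_eq_2 Sw_Suc Sw_0)

lemma sw4_as_Sw: "sw4 cm g x = Sw cm 3 (\<lambda>l. g (l 0) (l 1) (l 2) (l 3)) x"
  by (simp add: sw4_def sw3_def numeral_3_eq_3 numeral_2_eq_2 Sw_Suc Sw_0)

definition ins :: "nat \<Rightarrow> 'h \<Rightarrow> 'h \<Rightarrow> (nat \<Rightarrow> 'h) \<Rightarrow> nat \<Rightarrow> 'h" where
  "ins i c d l = (\<lambda>j. if j < i then l j else if j = i then c else if j = Suc i then d else l (j - 1))"

lemma linear_sum_list:
  assumes "Vector_Spaces.linear s1 s2 \<phi>"
  shows "\<phi> (sum_list (map G xs)) = sum_list (map (\<lambda>a. \<phi> (G a)) xs)"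
proof -
  have a: "\<phi> (x + y) = \<phi> x + \<phi> y" for x y using assms by (simp add: Vector_Spaces.linear_iff)
  have z: "\<phi> 0 = 0" using a[of 0 0] by simp
  show ?thesis by (induction xs) (simp_all add: a z)
qed

lemma linear_sum_list_fun:
  assumes "\<And>a. Vector_Spaces.linear s1 s2 (\<lambda>v. G v a)" "Vector_Spaces.vector_space s1" "Vector_Spaces.vector_space s2"
  shows "Vector_Spaces.linear s1 s2 (\<lambda>v. sum_list (map (G v) xs))"
proof (induction xs)
  case Nil
  have "module s2" using assms(3) by (simp add: module_iff_vector_space)
  then have "s2 c 0 = 0" for c by (rule module.scale_zero_right)
  then show ?case using assms(2,3) by (simp add: Vector_Spaces.linear_iff)
next
  case (Cons a xs)
  have "Vector_Spaces.linear s1 s2 (\<lambda>v. G v a)" by (rule assms(1))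
  with Cons show ?case using assms(2,3)
    by (auto simp: Vector_Spaces.linear_iff module.scale_right_distrib vector_space_def algebra_simps)
qed

locale YD =
  fixes sc :: "'k::field \<Rightarrow> 'h::ab_group_add \<Rightarrow> 'h"
    and mul :: "'h \<Rightarrow> 'h \<Rightarrow> 'h" and one :: 'h
    and cm :: "'h \<Rightarrow> ('h \<times> 'h) list" and eps :: "'h \<Rightarrow> 'k" and S :: "'h \<Rightarrow> 'h"
    and act beta :: "'h \<Rightarrow> 'h \<Rightarrow> 'h"
  assumes Y: "ydph sc mul one cm eps S act beta"
begin

abbreviation LK :: "('h \<Rightarrow> 'k) \<Rightarrow> bool" where "LK \<phi> \<equiv> Vector_Spaces.linear sc ((*)::'k\<Rightarrow>'k\<Rightarrow>'k) \<phi>"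
abbreviation LH :: "('h \<Rightarrow> 'h) \<Rightarrow> bool" where "LH E \<equiv> Vector_Spaces.linear sc sc E"

lemma vs: "Vector_Spaces.vector_space sc" using Y by (simp add: ydph_def alg_def)
lemma vsk: "Vector_Spaces.vector_space ((*)::'k\<Rightarrow>'k\<Rightarrow>'k)"
  by (simp add: vector_space_def module_def algebra_simps)
lemma mul_bil: "bilin sc sc mul" using Y by (simp add: ydph_def alg_def)
lemma mul_assoc: "mul (mul x y) z = mul x (mul y z)" using Y by (simp add: ydph_def alg_def)
lemma mul_one_l[simp]: "mul one x = x" using Y by (simp add: ydph_def alg_def)
lemma mul_one_r[simp]: "mul x one = x" using Y by (simp add: ydph_def alg_def)
lemma eps_lin: "LK eps" using Y by (simp add: ydph_def coalg_def)
lemma sw_lin_k: "bilin sc (*) f \<Longrightarrow> sw cm f (x + y) = sw cm f x + sw cm f y"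
   "bilin sc (*) f \<Longrightarrow> sw cm f (sc c x) = c * sw cm f x"
  using Y by (simp_all add: ydph_def coalg_def)
lemma coassoc_k: "trilin sc (*) f \<Longrightarrow> sw cm (\<lambda>a b. sw cm (\<lambda>c d. f c d b) a) x = sw cm (\<lambda>a b. sw cm (\<lambda>c d. f a c d) b) x"
  using Y by (simp add: ydph_def coalg_def)
lemma counit_l: "sw cm (\<lambda>a b. sc (eps a) b) x = x" using Y by (simp add: ydph_def coalg_def)
lemma counit_r: "sw cm (\<lambda>a b. sc (eps b) a) x = x" using Y by (simp add: ydph_def coalg_def)
lemma S_lin: "LH S" using Y by (simp add: ydph_def)
lemma antip_r: "sw cm (\<lambda>a b. mul a (S b)) x = sc (eps x) one" using Y by (simp add: ydph_def)
lemma antip_l: "sw cm (\<lambda>a b. mul (S a) b) x = sc (eps x) one" using Y by (simp add: ydph_def)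
lemma act_bil: "bilin sc sc act" using Y by (simp add: ydph_def)
lemma act_coalg_k: "bilin sc (*) f \<Longrightarrow> sw cm f (act x y) = sw cm (\<lambda>x1 x2. sw cm (\<lambda>y1 y2. f (act x1 y1) (act x2 y2)) y) x"
  using Y by (simp add: ydph_def)
lemma eps_act: "eps (act x y) = eps x * eps y" using Y by (simp add: ydph_def)
lemma P1: "act x (mul y z) = sw cm (\<lambda>x1 x2. mul (act x1 y) (act x2 z)) x" using Y by (simp add: ydph_def)
lemma P2: "act x (act y z) = act (sw cm (\<lambda>x1 x2. mul x1 (act x2 y)) x) z" using Y by (simp add: ydph_def)
lemma beta_lin2: "LH (beta x)" using Y by (simp add: ydph_def)
lemma beta_lin1: "LH (\<lambda>x. beta x y)" using Y by (simp add: ydph_def)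
lemma P3a: "sw cm (\<lambda>x1 x2. act x1 (beta x2 y)) x = sc (eps x) y" using Y by (simp add: ydph_def)
lemma P3b: "sw cm (\<lambda>x1 x2. beta x1 (act x2 y)) x = sc (eps x) y" using Y by (simp add: ydph_def)
lemma eps_mul: "eps (mul a b) = eps a * eps b" using Y by (simp add: ydph_def)
lemma eps_one[simp]: "eps one = 1" using Y by (simp add: ydph_def)
lemma cm_one_k: "bilin sc (*) f \<Longrightarrow> sw cm f one = f one one" using Y by (simp add: ydph_def)
lemma P5_k: "bilin sc (*) f \<Longrightarrow> sw cm f (mul x y)
        = sw4 cm (\<lambda>x1 x2 x3 x4. sw cm (\<lambda>y1 y2. f (mul x1 (act x2 (beta x4 y1))) (mul x3 y2)) y) x"
  using Y by (simp add: ydph_def)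
lemma P6a_k: "bilin sc (*) f \<Longrightarrow> sw cm f (pS cm S beta x)
        = sw cm (\<lambda>x1 x2. f (pS cm S beta x2) (pS cm S beta x1)) x"
  using Y by (simp add: ydph_def)
lemma P6b_k: "bilin sc (*) f \<Longrightarrow>
        sw cm (\<lambda>x1 x2. sw cm (\<lambda>y1 y2. f (act x1 y1) (plh mul cm S act beta x2 y2)) y) x
      = sw cm (\<lambda>x1 x2. sw cm (\<lambda>y1 y2. f (act x2 y2) (plh mul cm S act beta x1 y1)) y) x"
  using Y by (simp add: ydph_def)

lemma LK_iff: "LK \<phi> \<longleftrightarrow> (\<forall>x y. \<phi> (x + y) = \<phi> x + \<phi> y) \<and> (\<forall>c x. \<phi> (sc c x) = c * \<phi> x)"
  using vs vsk by (simp add: Vector_Spaces.linear_iff)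
lemma LH_iff: "LH \<phi> \<longleftrightarrow> (\<forall>x y. \<phi> (x + y) = \<phi> x + \<phi> y) \<and> (\<forall>c x. \<phi> (sc c x) = sc c (\<phi> x))"
  using vs by (simp add: Vector_Spaces.linear_iff)

lemma sep:
  assumes "\<And>\<phi>. LK \<phi> \<Longrightarrow> \<phi> u = \<phi> v"
  shows "u = v"
proof (rule ccontr)
  assume ne: "u \<noteq> v"
  interpret vp: vector_space_pair sc "(*)::'k\<Rightarrow>'k\<Rightarrow>'k" using vs vsk by (simp add: vector_space_pair_def)
  have "\<not> vp.vs1.dependent {u - v}" using ne by simp
  then obtain g where g: "LK g" "g (u - v) = 1"
    using vp.linear_independent_extend[of "{u - v}" "\<lambda>_. 1"] by auto
  have "g u = g (u - v) + g v" using g(1) unfolding LK_iff by (metis diff_add_cancel)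
  with assms[OF g(1)] g(2) show False by simp
qed


definition Mlin :: "nat \<Rightarrow> ((nat \<Rightarrow> 'h) \<Rightarrow> 'k) \<Rightarrow> bool" where
  "Mlin n F \<longleftrightarrow> (\<forall>i\<le>n. \<forall>l. LK (\<lambda>v. F (l(i := v))))"

lemma bilin_k_iff: "bilin sc (*) f \<longleftrightarrow> (\<forall>x. LK (f x)) \<and> (\<forall>y. LK (\<lambda>x. f x y))"
  by (simp add: bilin_def)
lemma trilin_k_iff: "trilin sc (*) f \<longleftrightarrow> (\<forall>x y. LK (f x y)) \<and> (\<forall>x z. LK (\<lambda>y. f x y z)) \<and> (\<forall>y z. LK (\<lambda>x. f x y z))"
  by (simp add: trilin_def)

lemma LK_sw_arg: assumes "bilin sc (*) f" shows "LK (\<lambda>x. sw cm f x)"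
  using sw_lin_k[OF assms] by (simp add: LK_iff)

lemma LK_sum_list_fun: "(\<And>a. LK (\<lambda>v. G v a)) \<Longrightarrow> LK (\<lambda>v. sum_list (map (G v) xs))"
  by (rule linear_sum_list_fun) (auto simp: vs vsk)

lemma LK_sw_body: "(\<And>a b. LK (\<lambda>v. G v a b)) \<Longrightarrow> LK (\<lambda>v. sw cm (G v) x)"
  unfolding sw_def by (rule LK_sum_list_fun) (auto simp: split_def)

lemma LK_Sw_body: "(\<And>l. LK (\<lambda>v. G v l)) \<Longrightarrow> LK (\<lambda>v. Sw cm n (G v) x)"
  unfolding Sw_def by (rule LK_sum_list_fun) auto

lemma LK_apply_sw: "LK \<phi> \<Longrightarrow> \<phi> (sw cm G x) = sw cm (\<lambda>a b. \<phi> (G a b)) x"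
  unfolding sw_def by (simp add: linear_sum_list split_def)

lemma Mlin_upd: "Mlin (Suc n) F \<Longrightarrow> Mlin n (\<lambda>l. F (l(Suc n := b)))"
  unfolding Mlin_def
proof safe
  fix i l assume a: "\<forall>i\<le>Suc n. \<forall>l. LK (\<lambda>v. F (l(i := v)))" "i \<le> n"
  have "(\<lambda>v. F (l(i := v, Suc n := b))) = (\<lambda>v. F ((l(Suc n := b))(i := v)))"
    using a(2) by (simp add: fun_upd_twist)
  then show "LK (\<lambda>v. F (l(i := v, Suc n := b)))" using a by simp
qed

lemma LK_Sw_arg: "Mlin n F \<Longrightarrow> LK (\<lambda>x. Sw cm n F x)"
proof (induction n arbitrary: F)
  case 0
  then show ?case by (simp add: Sw_0 Mlin_def)
next
  case (Suc n)
  have "bilin sc (*) (\<lambda>a b. Sw cm n (\<lambda>l. F (l(Suc n := b))) a)"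
    unfolding bilin_k_iff
  proof safe
    fix a show "LK (\<lambda>b. Sw cm n (\<lambda>l. F (l(Suc n := b))) a)"
      by (rule LK_Sw_body) (use Suc.prems in \<open>auto simp: Mlin_def\<close>)
  next
    fix b show "LK (\<lambda>a. Sw cm n (\<lambda>l. F (l(Suc n := b))) a)"
      by (rule Suc.IH[OF Mlin_upd[OF Suc.prems]])
  qed
  then show ?case unfolding Sw_Suc by (rule LK_sw_arg)
qed

lemma split_core:
  assumes "i \<le> n" "Mlin (Suc n) F"
  shows "Sw cm n (\<lambda>l. sw cm (\<lambda>c d. F (ins i c d l)) (l i)) x = Sw cm (Suc n) F x"
  using assms
proof (induction n arbitrary: F x i)
  case 0
  then have i: "i = 0" by simp
  have e: "ins 0 c d ((\<lambda>_. 0)(0 := x)) = ((\<lambda>_. 0)(0 := c))(Suc 0 := d)" for c d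
    by (auto simp: ins_def fun_eq_iff)
  show ?case unfolding i Sw_Suc Sw_0 by (simp add: e)
next
  case (Suc n)
  show ?case
  proof (cases "i = Suc n")
    case False
    with Suc.prems have i: "i \<le> n" by simp
    have e: "ins i c d (l(Suc n := b)) = (ins i c d l)(Suc (Suc n) := b)" for c d l b
      using i by (auto simp: ins_def fun_eq_iff)
    have "Sw cm (Suc n) (\<lambda>l. sw cm (\<lambda>c d. F (ins i c d l)) (l i)) x
      = sw cm (\<lambda>a b. Sw cm n (\<lambda>l. sw cm (\<lambda>c d. F ((ins i c d l)(Suc (Suc n) := b))) (l i)) a) x"
      unfolding Sw_Suc using i by (simp add: e)
    also have "\<dots> = sw cm (\<lambda>a b. Sw cm (Suc n) (\<lambda>l. F (l(Suc (Suc n) := b))) a) x"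
      using Suc.IH[OF i Mlin_upd[OF Suc.prems(2)]] by (simp del: fun_upd_apply)
    also have "\<dots> = Sw cm (Suc (Suc n)) F x" unfolding Sw_Suc[of cm "Suc n"] ..
    finally show ?thesis .
  next
    case True
    define g where "g = (\<lambda>a c d. Sw cm n (\<lambda>l. F (l(Suc n := c, Suc (Suc n) := d))) a)"
    have tri: "trilin sc (*) (\<lambda>a c d. g a c d)"
      unfolding trilin_k_iff g_def
    proof safe
      fix a c show "LK (\<lambda>d. Sw cm n (\<lambda>l. F (l(Suc n := c, Suc (Suc n) := d))) a)"
        by (rule LK_Sw_body) (use Suc.prems in \<open>auto simp: Mlin_def\<close>)
    next
      fix a d show "LK (\<lambda>c. Sw cm n (\<lambda>l. F (l(Suc n := c, Suc (Suc n) := d))) a)"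
      proof (rule LK_Sw_body)
        fix l
        have "(\<lambda>c. F (l(Suc n := c, Suc (Suc n) := d))) = (\<lambda>c. F ((l(Suc (Suc n) := d))(Suc n := c)))"
          by (simp add: fun_upd_twist)
        then show "LK (\<lambda>c. F (l(Suc n := c, Suc (Suc n) := d)))" using Suc.prems by (simp add: Mlin_def)
      qed
    next
      fix c d show "LK (\<lambda>a. Sw cm n (\<lambda>l. F (l(Suc n := c, Suc (Suc n) := d))) a)"
        by (rule LK_Sw_arg) (rule Mlin_upd[OF Mlin_upd[OF Suc.prems(2)]])
    qed
    have e: "l \<in> set (cop cm n a) \<Longrightarrow> ins (Suc n) c d (l(Suc n := b)) = l(Suc n := c, Suc (Suc n) := d)" for l a b c d
      using cop_support[of l cm n a] by (auto simp: ins_def fun_eq_iff)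
    have "Sw cm (Suc n) (\<lambda>l. sw cm (\<lambda>c d. F (ins i c d l)) (l i)) x
        = sw cm (\<lambda>a b. Sw cm n (\<lambda>l. sw cm (\<lambda>c d. F (l(Suc n := c, Suc (Suc n) := d))) b) a) x"
      unfolding Sw_Suc True
      by (intro arg_cong[where f="\<lambda>G. sw cm G x"] ext Sw_cong) (simp add: e)
    also have "\<dots> = sw cm (\<lambda>a b. sw cm (\<lambda>c d. g a c d) b) x"
      unfolding g_def by (simp only: sw_Sw_swap)
    also have "\<dots> = sw cm (\<lambda>a b. sw cm (\<lambda>c d. g c d b) a) x"
      using coassoc_k[OF tri] by simp
    also have "\<dots> = Sw cm (Suc (Suc n)) F x"
      unfolding Sw_Suc g_def by simp
    finally show ?thesis .
  qed
qed


lemma merge_k: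
  assumes "i \<le> n" "\<And>l v c d. G (l(i := v)) c d = G l c d"
    "Mlin (Suc n) (\<lambda>m. G (del i m) (m i) (m (Suc i)))"
  shows "Sw cm n (\<lambda>l. sw cm (\<lambda>c d. G l c d) (l i)) x = Sw cm (Suc n) (\<lambda>m. G (del i m) (m i) (m (Suc i))) x"
proof -
  have e: "del i (ins i c d l) = l(i := d)" for c d l
    by (auto simp: ins_def fun_eq_iff)
  have "G l c d = G (del i (ins i c d l)) (ins i c d l i) (ins i c d l (Suc i))" for l c d
    by (simp add: e assms(2)) (simp add: ins_def)
  then have "Sw cm n (\<lambda>l. sw cm (\<lambda>c d. G l c d) (l i)) x
     = Sw cm n (\<lambda>l. sw cm (\<lambda>c d. (\<lambda>m. G (del i m) (m i) (m (Suc i))) (ins i c d l)) (l i)) x"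
    by simp
  also have "\<dots> = Sw cm (Suc n) (\<lambda>m. G (del i m) (m i) (m (Suc i))) x"
    by (rule split_core[OF assms(1,3)])
  finally show ?thesis .
qed

lemma counit_k:
  assumes "Mlin n F" "i \<le> n"
  shows "Sw cm n (\<lambda>l. sw cm (\<lambda>c d. F (l(i := sc (eps c) d))) (l i)) x = Sw cm n F x"
    "Sw cm n (\<lambda>l. sw cm (\<lambda>c d. F (l(i := sc (eps d) c))) (l i)) x = Sw cm n F x"
proof -
  have L: "LK (\<lambda>v. F (l(i := v)))" for l using assms by (simp add: Mlin_def)
  show "Sw cm n (\<lambda>l. sw cm (\<lambda>c d. F (l(i := sc (eps c) d))) (l i)) x = Sw cm n F x"
    by (rule Sw_cong) (simp add: LK_apply_sw[OF L, symmetric] counit_l)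
  show "Sw cm n (\<lambda>l. sw cm (\<lambda>c d. F (l(i := sc (eps d) c))) (l i)) x = Sw cm n F x"
    by (rule Sw_cong) (simp add: LK_apply_sw[OF L, symmetric] counit_r)
qed

lemma pull_Sw_sw: "Sw cm n (\<lambda>l. sw cm (\<lambda>c d. G l c d) z) x = sw cm (\<lambda>c d. Sw cm n (\<lambda>l. G l c d) x) z"
  by (simp add: sw_Sw_swap)

lemma Mlin_0: "Mlin 0 F \<longleftrightarrow> (\<forall>l. LK (\<lambda>v. F (l(0 := v))))"
  by (simp add: Mlin_def)
lemma Mlin_Suc: "Mlin (Suc n) F \<longleftrightarrow> (\<forall>l. LK (\<lambda>v. F (l(Suc n := v)))) \<and> Mlin n F"
  by (auto simp: Mlin_def le_Suc_eq)
lemma Mlin_1: "Mlin 1 F \<longleftrightarrow> (\<forall>l. LK (\<lambda>v. F (l(1 := v)))) \<and> Mlin 0 F"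
  using Mlin_Suc[of 0 F] by simp
lemma Mlin_num: "Mlin (numeral k) F \<longleftrightarrow> (\<forall>l. LK (\<lambda>v. F (l(numeral k := v)))) \<and> Mlin (pred_numeral k) F"
  using Mlin_Suc[of "pred_numeral k" F] by (simp add: numeral_eq_Suc)

lemma LH_id: "LH (\<lambda>v. v)" using vs by (simp add: LH_iff)

lemma bil_LH1: "bilin sc sc op \<Longrightarrow> LH E \<Longrightarrow> LH (\<lambda>v. op (E v) c)"
  unfolding bilin_def LH_iff by auto
lemma bil_LH2: "bilin sc sc op \<Longrightarrow> LH E \<Longrightarrow> LH (\<lambda>v. op c (E v))"
  unfolding bilin_def LH_iff by auto
lemma bil_LK1: "bilin sc (*) f \<Longrightarrow> LH E \<Longrightarrow> LK (\<lambda>v. f (E v) c)"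
  unfolding bilin_def LH_iff LK_iff by auto
lemma bil_LK2: "bilin sc (*) f \<Longrightarrow> LH E \<Longrightarrow> LK (\<lambda>v. f c (E v))"
  unfolding bilin_def LH_iff LK_iff by auto
lemma lin_LK: "LK \<phi> \<Longrightarrow> LH E \<Longrightarrow> LK (\<lambda>v. \<phi> (E v))"
  unfolding LH_iff LK_iff by auto
lemma lin_LH: "LH \<phi> \<Longrightarrow> LH E \<Longrightarrow> LH (\<lambda>v. \<phi> (E v))"
  unfolding LH_iff by auto

lemma LH_mul1: "LH E \<Longrightarrow> LH (\<lambda>v. mul (E v) c)" by (rule bil_LH1[OF mul_bil])
lemma LH_mul2: "LH E \<Longrightarrow> LH (\<lambda>v. mul c (E v))" by (rule bil_LH2[OF mul_bil])
lemma LH_act1: "LH E \<Longrightarrow> LH (\<lambda>v. act (E v) c)" by (rule bil_LH1[OF act_bil])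
lemma LH_act2: "LH E \<Longrightarrow> LH (\<lambda>v. act c (E v))" by (rule bil_LH2[OF act_bil])
lemma LH_beta1: "LH E \<Longrightarrow> LH (\<lambda>v. beta (E v) c)" by (rule lin_LH[OF beta_lin1])
lemma LH_beta2: "LH E \<Longrightarrow> LH (\<lambda>v. beta c (E v))" by (rule lin_LH[OF beta_lin2])
lemma LH_S: "LH E \<Longrightarrow> LH (\<lambda>v. S (E v))" by (rule lin_LH[OF S_lin])
lemma LK_eps: "LH E \<Longrightarrow> LK (\<lambda>v. eps (E v))" by (rule lin_LK[OF eps_lin])
lemma LH_sc2: "LH E \<Longrightarrow> LH (\<lambda>v. sc c (E v))"
  using vs unfolding LH_iff by (simp add: vector_space_def module_def algebra_simps)
lemma LH_sc1: "LK e \<Longrightarrow> LH (\<lambda>v. sc (e v) w)"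
  using vs unfolding LH_iff LK_iff by (simp add: vector_space_def module_def algebra_simps)
lemma LK_mult1: "LK e \<Longrightarrow> LK (\<lambda>v. e v * c)"
  unfolding LK_iff by (simp add: algebra_simps)
lemma LK_mult2: "LK e \<Longrightarrow> LK (\<lambda>v. c * e v)"
  unfolding LK_iff by (simp add: algebra_simps)

lemma LH_sum_list_fun: "(\<And>a. LH (\<lambda>v. G v a)) \<Longrightarrow> LH (\<lambda>v. sum_list (map (G v) xs))"
  by (rule linear_sum_list_fun) (auto simp: vs)
lemma LH_sw_body: "(\<And>a b. LH (\<lambda>v. G v a b)) \<Longrightarrow> LH (\<lambda>v. sw cm (G v) x)"
  unfolding sw_def by (rule LH_sum_list_fun) (auto simp: split_def)
lemma LH_Sw_body: "(\<And>l. LH (\<lambda>v. G v l)) \<Longrightarrow> LH (\<lambda>v. Sw cm n (G v) x)"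
  unfolding Sw_def by (rule LH_sum_list_fun) auto
lemma LH_apply_sw: "LH \<phi> \<Longrightarrow> \<phi> (sw cm G x) = sw cm (\<lambda>a b. \<phi> (G a b)) x"
  unfolding sw_def by (simp add: linear_sum_list split_def)

lemma LK_sw_arg': "bilin sc (*) G \<Longrightarrow> LH E \<Longrightarrow> LK (\<lambda>v. sw cm G (E v))"
  by (rule lin_LK[OF LK_sw_arg])
lemma LK_Sw_arg': "Mlin n F \<Longrightarrow> LH E \<Longrightarrow> LK (\<lambda>v. Sw cm n F (E v))"
  by (rule lin_LK[OF LK_Sw_arg])

lemma LH_sw_arg: assumes "bilin sc sc G" shows "LH (\<lambda>x. sw cm G x)"
proof -
  have "bilin sc (*) (\<lambda>a b. \<phi> (G a b))" if "LK \<phi>" for \<phi>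
    using assms that unfolding bilin_def LH_iff LK_iff by auto
  then have "\<phi> (sw cm G (x + y)) = \<phi> (sw cm G x + sw cm G y)" "\<phi> (sw cm G (sc c x)) = \<phi> (sc c (sw cm G x))"
    if "LK \<phi>" for \<phi> x y c
    using that by (simp_all add: LK_apply_sw sw_lin_k LK_iff)
  then show ?thesis unfolding LH_iff by (auto intro: sep)
qed
lemma LH_sw_arg': "bilin sc sc G \<Longrightarrow> LH E \<Longrightarrow> LH (\<lambda>v. sw cm G (E v))"
  by (rule lin_LH[OF LH_sw_arg])

lemma bilin_k_I: "(\<And>a. LK (\<lambda>v. f v a)) \<Longrightarrow> (\<And>a. LK (\<lambda>v. f a v)) \<Longrightarrow> bilin sc (*) f"
  by (simp add: bilin_def)
lemma bilin_h_I: "(\<And>a. LH (\<lambda>v. f v a)) \<Longrightarrow> (\<And>a. LH (\<lambda>v. f a v)) \<Longrightarrow> bilin sc sc f"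
  by (simp add: bilin_def)

lemmas lin_simps = LH_id LH_mul1 LH_mul2 LH_act1 LH_act2 LH_beta1 LH_beta2 LH_S LK_eps LH_sc1 LH_sc2
  LK_mult1 LK_mult2 LK_sw_body LK_Sw_body LH_sw_body LH_Sw_body LK_sw_arg' LK_Sw_arg' LH_sw_arg'
  bilin_k_I bilin_h_I

lemma pull_mul1: "mul (sw cm G z) c = sw cm (\<lambda>a b. mul (G a b) c) z"
  by (rule LH_apply_sw) (simp add: lin_simps)
lemma pull_mul2: "mul c (sw cm G z) = sw cm (\<lambda>a b. mul c (G a b)) z"
  by (rule LH_apply_sw) (simp add: lin_simps)
lemma pull_act1: "act (sw cm G z) c = sw cm (\<lambda>a b. act (G a b) c) z"
  by (rule LH_apply_sw) (simp add: lin_simps)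
lemma pull_act2: "act c (sw cm G z) = sw cm (\<lambda>a b. act c (G a b)) z"
  by (rule LH_apply_sw) (simp add: lin_simps)
lemma pull_beta1: "beta (sw cm G z) c = sw cm (\<lambda>a b. beta (G a b) c) z"
  by (rule LH_apply_sw) (simp add: lin_simps)
lemma pull_beta2: "beta c (sw cm G z) = sw cm (\<lambda>a b. beta c (G a b)) z"
  by (rule LH_apply_sw) (simp add: lin_simps)
lemma pull_S: "S (sw cm G z) = sw cm (\<lambda>a b. S (G a b)) z"
  by (rule LH_apply_sw) (simp add: lin_simps)
lemma pull_sc: "sc c (sw cm G z) = sw cm (\<lambda>a b. sc c (G a b)) z"
  by (rule LH_apply_sw) (simp add: lin_simps)
lemma pull_eps: "eps (sw cm G z) = sw cm (\<lambda>a b. eps (G a b)) z"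
  by (rule LK_apply_sw) (rule eps_lin)
lemma pull_multk1: "sw cm G z * (c::'k) = sw cm (\<lambda>a b. G a b * c) z"
  unfolding sw_def by (simp add: sum_list_mult_const split_def)
lemma pull_multk2: "(c::'k) * sw cm G z = sw cm (\<lambda>a b. c * G a b) z"
  unfolding sw_def by (simp add: sum_list_const_mult split_def)
lemma pull_bil1: "bilin sc (*) f \<Longrightarrow> f (sw cm G z) c = sw cm (\<lambda>a b. f (G a b) c) z"
  by (rule LK_apply_sw[where \<phi>="\<lambda>v. f v c"]) (simp add: bilin_def)
lemma pull_bil2: "bilin sc (*) f \<Longrightarrow> f c (sw cm G z) = sw cm (\<lambda>a b. f c (G a b)) z"
  by (rule LK_apply_sw[where \<phi>="\<lambda>v. f c v"]) (simp add: bilin_def)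

lemma Suc00: "Suc (Suc 0) = 2" by simp

lemmas nf_simps = merge_k pull_Sw_sw pull_mul1 pull_mul2 pull_act1 pull_act2 pull_beta1 pull_beta2 pull_S
  pull_sc pull_eps pull_multk1 pull_multk2 Mlin_0 Mlin_Suc Mlin_num lin_simps Suc00


lemma bil_sc1: "bilin sc sc2 op \<Longrightarrow> op (sc c a) b = sc2 c (op a b)"
  unfolding bilin_def Vector_Spaces.linear_iff by auto
lemma bil_sc2: "bilin sc sc2 op \<Longrightarrow> op a (sc c b) = sc2 c (op a b)"
  unfolding bilin_def Vector_Spaces.linear_iff by auto
lemma bil_add1: "bilin sc sc2 op \<Longrightarrow> op (a + a') b = op a b + op a' b"
  unfolding bilin_def Vector_Spaces.linear_iff by auto
lemma bil_add2: "bilin sc sc2 op \<Longrightarrow> op a (b + b') = op a b + op a b'"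
  unfolding bilin_def Vector_Spaces.linear_iff by auto
lemma mul_sc1: "mul (sc c a) b = sc c (mul a b)" by (rule bil_sc1[OF mul_bil])
lemma mul_sc2: "mul a (sc c b) = sc c (mul a b)" by (rule bil_sc2[OF mul_bil])
lemma act_sc1: "act (sc c a) b = sc c (act a b)" by (rule bil_sc1[OF act_bil])
lemma act_sc2: "act a (sc c b) = sc c (act a b)" by (rule bil_sc2[OF act_bil])
lemma beta_sc1: "beta (sc c a) b = sc c (beta a b)" using beta_lin1 by (simp add: LH_iff)
lemma beta_sc2: "beta a (sc c b) = sc c (beta a b)" using beta_lin2 by (simp add: LH_iff)
lemma S_sc: "S (sc c a) = sc c (S a)" using S_lin by (simp add: LH_iff)
lemma eps_sc: "eps (sc c a) = c * eps a" using eps_lin by (simp add: LK_iff)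
lemma sc_sc: "sc c (sc d a) = sc (c * d) a"
  using vs by (simp add: vector_space_def module_def)
lemma sc_one_k: "sc 1 a = a"
  using vs by (simp add: vector_space_def module_def)

lemmas sc_simps = mul_sc1 mul_sc2 act_sc1 act_sc2 beta_sc1 beta_sc2 S_sc eps_sc sc_sc sc_one_k eps_act eps_mul

lemma bil_facts:
  assumes f: "bilin sc (*) f"
  shows "LH E \<Longrightarrow> LK (\<lambda>v. f (E v) c)" "LH E \<Longrightarrow> LK (\<lambda>v. f c (E v))" "LK (f c)"
    "f (sc k a) b = k * f a b" "f a (sc k b) = k * f a b"
    "f (sw cm G z) c = sw cm (\<lambda>a b. f (G a b) c) z" "f c (sw cm G z) = sw cm (\<lambda>a b. f c (G a b)) z"
  using bil_LK1[OF f] bil_LK2[OF f] bil_sc1[OF f] bil_sc2[OF f] pull_bil1[OF f] pull_bil2[OF f] f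
  by (auto simp: bilin_def)

lemma lin_facts:
  assumes p: "LK \<phi>"
  shows "LH E \<Longrightarrow> LK (\<lambda>v. \<phi> (E v))" "\<phi> (sc k a) = k * \<phi> a"
    "\<phi> (sw cm G z) = sw cm (\<lambda>a b. \<phi> (G a b)) z"
  using lin_LK[OF p] p LK_apply_sw[OF p] by (auto simp: LK_iff)

lemmas nf = nf_simps sc_simps mul_assoc mult_ac


lemma Sw_cong': "(\<And>l. F l = G l) \<Longrightarrow> Sw cm n F x = Sw cm n G x"
  by (rule Sw_cong) simp

lemma cm_one_h: assumes "bilin sc sc G" shows "sw cm G one = G one one"
proof (rule sep)
  fix \<phi> assume p: "LK \<phi>"
  have "bilin sc (*) (\<lambda>a b. \<phi> (G a b))"
    using assms p unfolding bilin_def LH_iff LK_iff by auto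
  then show "\<phi> (sw cm G one) = \<phi> (G one one)"
    by (simp add: LK_apply_sw[OF p] cm_one_k)
qed

lemma P3a_ctx: "LK \<Psi> \<Longrightarrow> sw cm (\<lambda>c d. \<Psi> (act c (beta d w))) z = \<Psi> (sc (eps z) w)"
  by (metis (no_types) LK_apply_sw P3a)
lemma P3b_ctx: "LK \<Psi> \<Longrightarrow> sw cm (\<lambda>c d. \<Psi> (beta c (act d w))) z = \<Psi> (sc (eps z) w)"
  by (metis (no_types) LK_apply_sw P3b)
lemma antip_r_ctx: "LK \<Psi> \<Longrightarrow> sw cm (\<lambda>c d. \<Psi> (mul c (S d))) z = \<Psi> (sc (eps z) one)"
  by (metis (no_types) LK_apply_sw antip_r)
lemma antip_l_ctx: "LK \<Psi> \<Longrightarrow> sw cm (\<lambda>c d. \<Psi> (mul (S c) d)) z = \<Psi> (sc (eps z) one)"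
  by (metis (no_types) LK_apply_sw antip_l)


lemma pull_sw_arg_k: "bilin sc (*) G \<Longrightarrow> sw cm G (sw cm H z) = sw cm (\<lambda>a b. sw cm G (H a b)) z"
  by (rule LK_apply_sw[OF LK_sw_arg])
lemma pull_sw_arg_h: "bilin sc sc G \<Longrightarrow> sw cm G (sw cm H z) = sw cm (\<lambda>a b. sw cm G (H a b)) z"
  by (rule LH_apply_sw[OF LH_sw_arg])

lemma sw_sc_k: "bilin sc (*) G \<Longrightarrow> sw cm G (sc c z) = c * sw cm G z"
  by (rule sw_lin_k(2))
lemma sw_sc_h: "bilin sc sc G \<Longrightarrow> sw cm G (sc c z) = sc c (sw cm G z)"
  using LH_sw_arg[of G] by (simp add: LH_iff)

lemmas nf2 = nf LK_sw_arg pull_sw_arg_k pull_sw_arg_h sw_sc_k sw_sc_h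


lemma del_ins: "del i (ins i c d l) = l(i := d)"
  by (auto simp: ins_def fun_eq_iff)

lemma counit_merge:
  assumes F: "Mlin n F" and i: "i \<le> n"
  shows "Sw cm (Suc n) (\<lambda>m. F ((del i m)(i := sc (eps (m (Suc i))) (m i)))) x = Sw cm n F x"
    "Sw cm (Suc n) (\<lambda>m. F ((del i m)(i := sc (eps (m i)) (m (Suc i))))) x = Sw cm n F x"
proof -
  have LF: "j \<le> n \<Longrightarrow> LK (\<lambda>v. F (L(j := v)))" for j L using F by (simp add: Mlin_def)
  have lin_sc1: "LK (\<lambda>v. F (L(i := sc e v)))" for L e
    using lin_LK[OF LF[OF i, of L] LH_sc2[OF LH_id, of e]] by simp
  have lin_sc2: "LK (\<lambda>v. F (L(i := sc (eps v) w)))" for L w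
    using lin_LK[OF LF[OF i, of L] LH_sc1[OF lin_LK[OF eps_lin LH_id], of w]] by simp
  have M: "Mlin (Suc n) (\<lambda>m. F ((del i m)(i := g (m (Suc i)) (m i))))"
    if g1: "\<And>L e. LK (\<lambda>v. F (L(i := g e v)))" and g2: "\<And>L w. LK (\<lambda>v. F (L(i := g v w)))" for g
    unfolding Mlin_def
  proof (intro allI impI)
    fix j l assume j: "j \<le> Suc n"
    consider "j < i" | "j = i" | "j = Suc i" | "j > Suc i" by linarith
    then show "LK (\<lambda>v. F ((del i (l(j := v)))(i := g ((l(j := v)) (Suc i)) ((l(j := v)) i))))"
    proof cases
      case 1
      have "(del i (l(j := v)))(i := g ((l(j := v)) (Suc i)) ((l(j := v)) i))
          = ((del i l)(i := g (l (Suc i)) (l i)))(j := v)" for v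
        using 1 by (auto simp: fun_eq_iff)
      then show ?thesis using LF[of j] 1 i by simp
    next
      case 2
      have "(del i (l(j := v)))(i := g ((l(j := v)) (Suc i)) ((l(j := v)) i))
          = (del i l)(i := g (l (Suc i)) v)" for v
        using 2 by (auto simp: fun_eq_iff)
      then show ?thesis using g1 by simp
    next
      case 3
      have "(del i (l(j := v)))(i := g ((l(j := v)) (Suc i)) ((l(j := v)) i))
          = (del i l)(i := g v (l i))" for v
        using 3 by (auto simp: fun_eq_iff)
      then show ?thesis using g2 by simp
    next
      case 4
      have "(del i (l(j := v)))(i := g ((l(j := v)) (Suc i)) ((l(j := v)) i))
          = ((del i l)(i := g (l (Suc i)) (l i)))(j - 1 := v)" for v
        using 4 by (auto simp: fun_eq_iff)
      then show ?thesis using LF[of "j - 1"] 4 j by simp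
    qed
  qed
  have e: "(\<lambda>m. F ((del i m)(i := g (m (Suc i)) (m i)))) (ins i c d l) = F (l(i := g d c))" for g c d l
    by (simp add: del_ins) (simp add: ins_def)
  have M1: "Mlin (Suc n) (\<lambda>m. F ((del i m)(i := sc (eps (m (Suc i))) (m i))))"
    using M[where g="\<lambda>a b. sc (eps a) b"] lin_sc1 lin_sc2 by simp
  have M2: "Mlin (Suc n) (\<lambda>m. F ((del i m)(i := sc (eps (m i)) (m (Suc i)))))"
    using M[where g="\<lambda>a b. sc (eps b) a"] lin_sc1 lin_sc2 by simp
  show "Sw cm (Suc n) (\<lambda>m. F ((del i m)(i := sc (eps (m (Suc i))) (m i)))) x = Sw cm n F x"
    using split_core[OF i M1, of x, symmetric]
      counit_k(2)[OF F i, of x] e[where g="\<lambda>a b. sc (eps a) b"] by simp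
  show "Sw cm (Suc n) (\<lambda>m. F ((del i m)(i := sc (eps (m i)) (m (Suc i))))) x = Sw cm n F x"
    using split_core[OF i M2, of x, symmetric]
      counit_k(1)[OF F i, of x] e[where g="\<lambda>a b. sc (eps b) a"] by simp
qed

lemma counit_merge_in:
  assumes "\<And>l. Mlin m (G l)" "i \<le> m"
  shows "Sw cm n (\<lambda>l. Sw cm (Suc m) (\<lambda>k. G l ((del i k)(i := sc (eps (k (Suc i))) (k i)))) y) x = Sw cm n (\<lambda>l. Sw cm m (G l) y) x"
    "Sw cm n (\<lambda>l. Sw cm (Suc m) (\<lambda>k. G l ((del i k)(i := sc (eps (k i)) (k (Suc i))))) y) x = Sw cm n (\<lambda>l. Sw cm m (G l) y) x"
  using counit_merge[OF assms(1) assms(2)] by (auto intro!: Sw_cong')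


lemma tri_facts:
  assumes f: "trilin sc (*) f"
  shows "LH E \<Longrightarrow> LK (\<lambda>v. f (E v) b c)" "LH E \<Longrightarrow> LK (\<lambda>v. f a (E v) c)" "LH E \<Longrightarrow> LK (\<lambda>v. f a b (E v))"
    "f (sc k a) b c = k * f a b c" "f a (sc k b) c = k * f a b c" "f a b (sc k c) = k * f a b c"
    "f (sw cm G z) b c = sw cm (\<lambda>x y. f (G x y) b c) z"
    "f a (sw cm G z) c = sw cm (\<lambda>x y. f a (G x y) c) z"
    "f a b (sw cm G z) = sw cm (\<lambda>x y. f a b (G x y)) z"
proof -
  have l1: "LK (\<lambda>v. f v b c)" and l2: "LK (\<lambda>v. f a v c)" and l3: "LK (\<lambda>v. f a b v)" for a b c
    using f unfolding trilin_def by auto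
  show "LH E \<Longrightarrow> LK (\<lambda>v. f (E v) b c)" "LH E \<Longrightarrow> LK (\<lambda>v. f a (E v) c)" "LH E \<Longrightarrow> LK (\<lambda>v. f a b (E v))"
    using lin_LK[OF l1] lin_LK[OF l2] lin_LK[OF l3] by auto
  show "f (sc k a) b c = k * f a b c" "f a (sc k b) c = k * f a b c" "f a b (sc k c) = k * f a b c"
    using l1 l2 l3 by (auto simp: LK_iff)
  show "f (sw cm G z) b c = sw cm (\<lambda>x y. f (G x y) b c) z"
    "f a (sw cm G z) c = sw cm (\<lambda>x y. f a (G x y) c) z"
    "f a b (sw cm G z) = sw cm (\<lambda>x y. f a b (G x y)) z"
    using LK_apply_sw[OF l1] LK_apply_sw[OF l2] LK_apply_sw[OF l3] by auto
qed

lemma cm_one_simp: "bilin sc (*) f \<Longrightarrow> sw cm f one = f one one" by (rule cm_one_k)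

end



context YD begin

lemma e_mult: "act x one = sw cm (\<lambda>a b. mul (act a one) (act b one)) x"
  using P1[of x one one] by simp

lemma e_comult: "bilin sc (*) f \<Longrightarrow> sw cm f (act x one) = sw cm (\<lambda>a b. f (act a one) (act b one)) x"
  by (simp add: act_coalg_k cm_one_k lin_simps bil_facts)

lemma e_antip: "sw cm (\<lambda>a b. mul (act a one) (S (act b one))) x = sc (eps x) one"
proof -
  have "sw cm (\<lambda>a b. mul a (S b)) (act x one) = sw cm (\<lambda>a b. mul (act a one) (S (act b one))) x"
  proof (rule sep)
    fix \<phi> assume p: "LK \<phi>"
    show "\<phi> (sw cm (\<lambda>a b. mul a (S b)) (act x one)) = \<phi> (sw cm (\<lambda>a b. mul (act a one) (S (act b one))) x)"
      by (simp add: lin_facts[OF p] e_comult lin_simps)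
  qed
  then show ?thesis using antip_r[of "act x one"] by (simp add: eps_act)
qed

lemma act_one_r: "act x one = sc (eps x) one"
proof (rule sep)
  fix \<phi> assume p: "LK \<phi>"
  note P = lin_facts[OF p]
  have "\<phi> (act x one) = Sw cm 0 (\<lambda>l. \<phi> (act (l 0) one)) x" by (simp add: Sw_0)
  also have "\<dots> = Sw cm 0 (\<lambda>l. sw cm (\<lambda>c d. \<phi> (act (sc (eps d) c) one)) (l 0)) x"
    using counit_k(2)[of 0 "\<lambda>l. \<phi> (act (l 0) one)" 0 x] by (simp add: nf P)
  also have "\<dots> = Sw cm 1 (\<lambda>m. \<phi> (mul (act (m 0) one) (sc (eps (m 1)) one))) x"
    by (simp add: nf P)
  also have "\<dots> = Sw cm 1 (\<lambda>m. \<phi> (mul (act (m 0) one) (sw cm (\<lambda>a b. mul (act a one) (S (act b one))) (m 1)))) x"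
    by (simp add: e_antip)
  also have "\<dots> = Sw cm 1 (\<lambda>l. \<phi> (mul (sw cm (\<lambda>a b. mul (act a one) (act b one)) (l 0)) (S (act (l 1) one)))) x"
    by (simp add: nf P)
  also have "\<dots> = Sw cm 1 (\<lambda>l. \<phi> (mul (act (l 0) one) (S (act (l 1) one)))) x"
    by (simp add: e_mult[symmetric])
  also have "\<dots> = Sw cm 0 (\<lambda>l. \<phi> (sw cm (\<lambda>a b. mul (act a one) (S (act b one))) (l 0))) x"
    by (simp add: nf P)
  also have "\<dots> = \<phi> (sc (eps x) one)" by (simp add: e_antip Sw_0)
  finally show "\<phi> (act x one) = \<phi> (sc (eps x) one)" .
qed


lemma act_one_l: "act one y = y"
proof -
  have a: "act one (beta one y) = y" for y
    using P3a[of y one] by (simp add: cm_one_h lin_simps sc_one_k)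
  have b: "beta one (act one y) = y" for y
    using P3b[of y one] by (simp add: cm_one_h lin_simps sc_one_k)
  have c: "act one (act one z) = act one z" for z
    using P2[of one one z] by (simp add: cm_one_h lin_simps act_one_r sc_one_k)
  have "act one y = beta one (act one (act one y))" by (rule b[symmetric])
  also have "\<dots> = y" by (simp add: c b)
  finally show ?thesis .
qed

lemma eps_S: "eps (S x) = eps x"
proof -
  have "eps (S x) = eps (S (sw cm (\<lambda>a b. sc (eps a) b) x))" by (simp add: counit_l)
  also have "\<dots> = eps (sw cm (\<lambda>a b. mul a (S b)) x)" by (simp add: nf)
  also have "\<dots> = eps x" by (simp add: antip_r sc_simps)
  finally show ?thesis .
qed

lemma eps_beta: "eps (beta x y) = eps x * eps y"
proof -
  have "eps (beta x y) = eps (beta (sw cm (\<lambda>a b. sc (eps a) b) x) y)" by (simp add: counit_l)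
  also have "\<dots> = eps (sw cm (\<lambda>a b. act a (beta b y)) x)" by (simp add: nf)
  also have "\<dots> = eps x * eps y" by (simp add: P3a sc_simps)
  finally show ?thesis .
qed

abbreviation bul where "bul \<equiv> pbul mul cm act"
abbreviation T where "T \<equiv> pS cm S beta"

lemma eps_T: "eps (T x) = eps x"
proof -
  have "eps (T x) = eps (sw cm (\<lambda>a b. sc (eps a) b) x)" by (simp add: pS_def nf eps_beta eps_S)
  also have "\<dots> = eps x" by (simp add: counit_l)
  finally show ?thesis .
qed

lemma eps_bul: "eps (bul x y) = eps x * eps y"
proof -
  have "eps (bul x y) = eps (sw cm (\<lambda>a b. sc (eps a) b) x) * eps y" by (simp add: pbul_def nf mult.assoc)
  also have "\<dots> = eps x * eps y" by (simp add: counit_l)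
  finally show ?thesis .
qed

lemma bul_one_r: "bul x one = x"
proof -
  have "bul x one = sw cm (\<lambda>a b. sc (eps b) a) x" by (simp add: pbul_def act_one_r nf)
  also have "\<dots> = x" by (rule counit_r)
  finally show ?thesis .
qed

lemma bul_one_l: "bul one y = y"
  by (simp add: pbul_def cm_one_h lin_simps act_one_l)

lemma bul_comult: assumes f: "bilin sc (*) f"
  shows "sw cm f (bul x y) = sw cm (\<lambda>a1 a2. sw cm (\<lambda>b1 b2. f (bul a1 b1) (bul a2 b2)) y) x"
proof -
  note F = bil_facts[OF f]
  have "sw cm f (bul x y) = Sw cm 0 (\<lambda>l. Sw cm 0 (\<lambda>k. sw cm (\<lambda>a1 a2. sw cm f (mul a1 (act a2 (k 0)))) (l 0)) y) x"
    by (simp add: Sw_0 pbul_def LK_apply_sw[OF LK_sw_arg[OF f]])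
  also have "\<dots> = Sw cm 5 (\<lambda>m. Sw cm 1 (\<lambda>k. f (mul (m 0) (act (m 1) (beta (m 3) (act (m 4) (k 0))))) (mul (m 2) (act (m 5) (k 1)))) y) x"
    by (simp add: nf F P5_k[OF f] act_coalg_k sw4_def sw3_def)
  also have "\<dots> = Sw cm 4 (\<lambda>l. Sw cm 1 (\<lambda>k. sw cm (\<lambda>c d. f (mul (l 0) (act (l 1) (beta c (act d (k 0))))) (mul (l 2) (act (l 4) (k 1)))) (l 3)) y) x"
    by (simp add: nf F)
  also have "\<dots> = Sw cm 4 (\<lambda>l. Sw cm 1 (\<lambda>k. f (mul (l 0) (act (l 1) (sc (eps (l 3)) (k 0)))) (mul (l 2) (act (l 4) (k 1)))) y) x"
    by (intro Sw_cong' P3b_ctx) (simp add: nf F)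
  also have "\<dots> = Sw cm 3 (\<lambda>l. sw cm (\<lambda>c d. Sw cm 1 (\<lambda>k. f (mul (l 0) (act (l 1) (k 0))) (mul (sc (eps d) c) (act (l 3) (k 1)))) y) (l 2)) x"
    by (simp add: nf F)
  also have "\<dots> = Sw cm 3 (\<lambda>l. Sw cm 1 (\<lambda>k. f (mul (l 0) (act (l 1) (k 0))) (mul (l 2) (act (l 3) (k 1)))) y) x"
    using counit_k(2)[of 3 "\<lambda>l. Sw cm 1 (\<lambda>k. f (mul (l 0) (act (l 1) (k 0))) (mul (l 2) (act (l 3) (k 1)))) y" 2 x]
    by (simp add: nf F)
  also have "\<dots> = sw cm (\<lambda>a1 a2. sw cm (\<lambda>b1 b2. f (bul a1 b1) (bul a2 b2)) y) x"
  proof -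
    have "Sw cm 0 (\<lambda>l. Sw cm 0 (\<lambda>k. sw cm (\<lambda>a1 a2. sw cm (\<lambda>b1 b2. f (bul a1 b1) (bul a2 b2)) (k 0)) (l 0)) y) x
      = Sw cm 3 (\<lambda>l. Sw cm 1 (\<lambda>k. f (mul (l 0) (act (l 1) (k 0))) (mul (l 2) (act (l 3) (k 1)))) y) x"
      by (simp add: nf F pbul_def)
    then show ?thesis by (simp add: Sw_0)
  qed
  finally show ?thesis .
qed


lemma bul_assoc: "bul (bul x y) z = bul x (bul y z)"
proof (rule sep)
  fix \<phi> assume p: "LK \<phi>"
  note P = lin_facts[OF p]
  have "\<phi> (bul (bul x y) z) = sw cm (\<lambda>a b. \<phi> (mul a (act b z))) (bul x y)"
    by (simp add: pbul_def P)
  also have "\<dots> = sw cm (\<lambda>a1 a2. sw cm (\<lambda>b1 b2. \<phi> (mul (bul a1 b1) (act (bul a2 b2) z))) y) x"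
    by (rule bul_comult) (simp add: lin_simps P)
  also have "\<dots> = \<phi> (bul x (bul y z))"
  proof -
    have "Sw cm 0 (\<lambda>l. Sw cm 0 (\<lambda>k. sw cm (\<lambda>a1 a2. sw cm (\<lambda>b1 b2. \<phi> (mul (bul a1 b1) (act (bul a2 b2) z))) (k 0)) (l 0)) y) x
      = Sw cm 0 (\<lambda>l. Sw cm 0 (\<lambda>k. \<phi> (bul (l 0) (bul (k 0) z))) y) x"
      by (simp add: nf P pbul_def P1 P2)
    then show ?thesis by (simp add: Sw_0)
  qed
  finally show "\<phi> (bul (bul x y) z) = \<phi> (bul x (bul y z))" .
qed

lemma bul_bil: "bilin sc sc bul"
  by (simp add: pbul_def lin_simps)

lemma T_lin: "LH T"
  unfolding pS_def by (rule LH_sw_arg) (simp add: lin_simps)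

lemma antipode_r: "sw cm (\<lambda>a b. bul a (T b)) x = sc (eps x) one"
proof (rule sep)
  fix \<phi> assume p: "LK \<phi>"
  note P = lin_facts[OF p]
  have "\<phi> (sw cm (\<lambda>a b. bul a (T b)) x) = Sw cm 0 (\<lambda>l. \<phi> (sw cm (\<lambda>a b. bul a (T b)) (l 0))) x"
    by (simp add: Sw_0)
  also have "\<dots> = Sw cm 2 (\<lambda>l. sw cm (\<lambda>c d. \<phi> (mul (l 0) (act c (beta d (S (l 2)))))) (l 1)) x"
    by (simp add: nf P pbul_def pS_def)
  also have "\<dots> = Sw cm 2 (\<lambda>l. \<phi> (mul (l 0) (sc (eps (l 1)) (S (l 2))))) x"
    by (intro Sw_cong' P3a_ctx) (simp add: nf P)
  also have "\<dots> = Sw cm 1 (\<lambda>l. sw cm (\<lambda>c d. \<phi> (mul (l 0) (S ((l(1 := sc (eps c) d)) 1)))) (l 1)) x"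
    by (simp add: nf P)
  also have "\<dots> = Sw cm 1 (\<lambda>l. \<phi> (mul (l 0) (S (l 1)))) x"
    using counit_k(1)[of 1 "\<lambda>l. \<phi> (mul (l 0) (S (l 1)))" 1 x] by (simp add: nf P)
  also have "\<dots> = Sw cm 0 (\<lambda>l. sw cm (\<lambda>c d. \<phi> (mul c (S d))) (l 0)) x"
    by (simp add: nf P)
  also have "\<dots> = \<phi> (sc (eps x) one)"
    by (simp add: antip_r_ctx P Sw_0 lin_simps)
  finally show "\<phi> (sw cm (\<lambda>a b. bul a (T b)) x) = \<phi> (sc (eps x) one)" .
qed

lemma act_act_T: "sw cm (\<lambda>c d. act c (act (T d) y)) z = sc (eps z) y"
proof -
  have "sw cm (\<lambda>c d. act c (act (T d) y)) z = act (sw cm (\<lambda>a b. bul a (T b)) z) y"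
    by (simp add: P2 pull_act1 pbul_def)
  also have "\<dots> = sc (eps z) y" by (simp add: antipode_r sc_simps act_one_l)
  finally show ?thesis .
qed

lemma T_act: "act (T x) y = beta x y"
proof (rule sep)
  fix \<phi> assume p: "LK \<phi>"
  note P = lin_facts[OF p]
  have "\<phi> (beta x y) = Sw cm 0 (\<lambda>l. sw cm (\<lambda>c d. \<phi> (beta ((l(0 := sc (eps d) c)) 0) y)) (l 0)) x"
    using counit_k(2)[of 0 "\<lambda>l. \<phi> (beta (l 0) y)" 0 x] by (simp add: nf P Sw_0)
  also have "\<dots> = Sw cm 1 (\<lambda>l. \<phi> (beta (l 0) (sc (eps (l 1)) y))) x"
    by (simp add: nf P)
  also have "\<dots> = Sw cm 1 (\<lambda>l. \<phi> (beta (l 0) (sw cm (\<lambda>c d. act c (act (T d) y)) (l 1)))) x"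
    by (simp add: act_act_T)
  also have "\<dots> = Sw cm 1 (\<lambda>l. sw cm (\<lambda>c d. \<phi> (beta c (act d (act (T (l 1)) y)))) (l 0)) x"
    by (simp add: nf P pS_def)
  also have "\<dots> = Sw cm 1 (\<lambda>l. \<phi> (sc (eps (l 0)) (act (T (l 1)) y))) x"
    by (intro Sw_cong' P3b_ctx) (simp add: nf P)
  also have "\<dots> = Sw cm 0 (\<lambda>l. \<phi> (act (T (sw cm (\<lambda>c d. sc (eps c) d) (l 0))) y)) x"
    by (simp add: nf2 P pS_def)
  also have "\<dots> = \<phi> (act (T x) y)" by (simp only: counit_l Sw_0) simp
  finally show "\<phi> (act (T x) y) = \<phi> (beta x y)" by simp
qed

lemma beta_one: "beta x one = sc (eps x) one"
  using T_act[of x one] by (simp add: act_one_r eps_T)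

lemma beta_mul: "beta x (mul a b) = sw cm (\<lambda>x1 x2. mul (beta x2 a) (beta x1 b)) x"
proof (rule sep)
  fix \<phi> assume p: "LK \<phi>"
  note P = lin_facts[OF p]
  have "\<phi> (beta x (mul a b)) = sw cm (\<lambda>c d. \<phi> (mul (act c a) (act d b))) (T x)"
    by (simp add: T_act[symmetric] P1 P)
  also have "\<dots> = sw cm (\<lambda>x1 x2. \<phi> (mul (act (T x2) a) (act (T x1) b))) x"
    by (rule P6a_k) (simp add: lin_simps P)
  also have "\<dots> = \<phi> (sw cm (\<lambda>x1 x2. mul (beta x2 a) (beta x1 b)) x)"
    by (simp add: T_act P)
  finally show "\<phi> (beta x (mul a b)) = \<phi> (sw cm (\<lambda>x1 x2. mul (beta x2 a) (beta x1 b)) x)" .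
qed

lemma bact_eq: "bact mul bul cm S a b = act a b"
proof (rule sep)
  fix \<phi> assume p: "LK \<phi>"
  note P = lin_facts[OF p]
  have "\<phi> (bact mul bul cm S a b) = Sw cm 0 (\<lambda>l. \<phi> (bact mul bul cm S (l 0) b)) a"
    by (simp add: Sw_0)
  also have "\<dots> = Sw cm 1 (\<lambda>l. sw cm (\<lambda>c d. \<phi> (mul (mul (S c) d) (act (l 1) b))) (l 0)) a"
    by (simp add: bact_def nf P pbul_def)
  also have "\<dots> = Sw cm 1 (\<lambda>l. \<phi> (mul (sc (eps (l 0)) one) (act (l 1) b))) a"
    by (intro Sw_cong' antip_l_ctx) (simp add: nf P)
  also have "\<dots> = Sw cm 0 (\<lambda>l. \<phi> (act (sw cm (\<lambda>c d. sc (eps c) d) (l 0)) b)) a"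
    by (simp add: nf P)
  also have "\<dots> = \<phi> (act a b)" by (simp add: counit_l Sw_0)
  finally show "\<phi> (bact mul bul cm S a b) = \<phi> (act a b)" .
qed


lemma antipode_l: "sw cm (\<lambda>a b. bul (T a) b) x = sc (eps x) one"
proof (rule sep)
  fix \<phi> assume p: "LK \<phi>"
  note P = lin_facts[OF p]
  have key: "\<phi> (bul (T a) b) = sw cm (\<lambda>a1 a2. \<phi> (mul (T a2) (beta a1 b))) a" for a b
  proof -
    have "\<phi> (bul (T a) b) = sw cm (\<lambda>c d. \<phi> (mul c (act d b))) (T a)"
      by (simp add: pbul_def P)
    also have "\<dots> = sw cm (\<lambda>a1 a2. \<phi> (mul (T a2) (act (T a1) b))) a"
      by (rule P6a_k) (simp add: lin_simps P)
    finally show ?thesis by (simp add: T_act)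
  qed
  have "\<phi> (sw cm (\<lambda>a b. bul (T a) b) x) = Sw cm 0 (\<lambda>l. sw cm (\<lambda>a b. sw cm (\<lambda>a1 a2. \<phi> (mul (T a2) (beta a1 b))) a) (l 0)) x"
    by (simp add: Sw_0 P key)
  also have "\<dots> = Sw cm 2 (\<lambda>l. \<phi> (sw cm (\<lambda>c d. mul (beta d (S (l 1))) (beta c (l 2))) (l 0))) x"
    by (simp add: nf P pS_def)
  also have "\<dots> = Sw cm 2 (\<lambda>l. \<phi> (beta (l 0) (mul (S (l 1)) (l 2)))) x"
    by (simp add: beta_mul)
  also have "\<dots> = Sw cm 1 (\<lambda>l. sw cm (\<lambda>c d. \<phi> (beta (l 0) (mul (S c) d))) (l 1)) x"
    by (simp add: nf P)
  also have "\<dots> = Sw cm 1 (\<lambda>l. \<phi> (beta (l 0) (sc (eps (l 1)) one))) x"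
    by (intro Sw_cong' antip_l_ctx) (simp add: nf P)
  also have "\<dots> = Sw cm 0 (\<lambda>l. sw cm (\<lambda>c d. \<phi> (sc (eps ((l(0 := sc (eps c) d)) 0)) one)) (l 0)) x"
    by (simp add: nf P beta_one)
  also have "\<dots> = \<phi> (sc (eps x) one)"
    using counit_k(1)[of 0 "\<lambda>l. \<phi> (sc (eps (l 0)) one)" 0 x] by (simp add: nf P Sw_0)
  finally show "\<phi> (sw cm (\<lambda>a b. bul (T a) b) x) = \<phi> (sc (eps x) one)" .
qed

lemma S_one: "S one = one"
  using antip_r[of one] by (simp add: cm_one_h lin_simps sc_one_k)

lemma T_one: "T one = one"
  by (simp add: pS_def cm_one_h lin_simps S_one beta_one sc_one_k)

lemma LH_bul1: "LH E \<Longrightarrow> LH (\<lambda>v. bul (E v) c)" by (rule bil_LH1[OF bul_bil])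
lemma LH_bul2: "LH E \<Longrightarrow> LH (\<lambda>v. bul c (E v))" by (rule bil_LH2[OF bul_bil])
lemma LH_T: "LH E \<Longrightarrow> LH (\<lambda>v. T (E v))" by (rule lin_LH[OF T_lin])
lemma pull_bul1: "bul (sw cm G z) c = sw cm (\<lambda>a b. bul (G a b) c) z"
  by (rule LH_apply_sw) (simp add: lin_simps LH_bul1)
lemma pull_bul2: "bul c (sw cm G z) = sw cm (\<lambda>a b. bul c (G a b)) z"
  by (rule LH_apply_sw) (simp add: lin_simps LH_bul2)
lemma pull_T: "T (sw cm G z) = sw cm (\<lambda>a b. T (G a b)) z"
  by (rule LH_apply_sw) (rule T_lin)
lemma bul_sc1: "bul (sc c a) b = sc c (bul a b)" by (rule bil_sc1[OF bul_bil])
lemma bul_sc2: "bul a (sc c b) = sc c (bul a b)" by (rule bil_sc2[OF bul_bil])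
lemma T_sc: "T (sc c a) = sc c (T a)" using T_lin by (simp add: LH_iff)

lemma antipode_l_ctx: "LK \<Psi> \<Longrightarrow> sw cm (\<lambda>c d. \<Psi> (bul (T c) d)) z = \<Psi> (sc (eps z) one)"
  by (metis (no_types) LK_apply_sw antipode_l)
lemma antipode_r_ctx: "LK \<Psi> \<Longrightarrow> sw cm (\<lambda>c d. \<Psi> (bul c (T d))) z = \<Psi> (sc (eps z) one)"
  by (metis (no_types) LK_apply_sw antipode_r)

lemmas nfB = nf2 LH_bul1 LH_bul2 LH_T pull_bul1 pull_bul2 pull_T bul_sc1 bul_sc2 T_sc bul_assoc
  bul_one_l bul_one_r T_one eps_bul eps_T bul_comult act_coalg_k P6a_k

lemma T_antimult: "T (bul x y) = bul (T y) (T x)"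
proof (rule sep)
  fix \<phi> assume p: "LK \<phi>"
  note P = lin_facts[OF p]
  have "\<phi> (bul (T y) (T x)) = Sw cm 0 (\<lambda>l. Sw cm 0 (\<lambda>k. \<phi> (bul (T (k 0)) (T (l 0)))) y) x"
    by (simp add: Sw_0)
  also have "\<dots> = Sw cm 0 (\<lambda>l. sw cm (\<lambda>c d. Sw cm 0 (\<lambda>k. \<phi> (bul (T (k 0)) (T ((l(0 := sc (eps d) c)) 0)))) y) (l 0)) x"
    using counit_k(2)[of 0 "\<lambda>l. Sw cm 0 (\<lambda>k. \<phi> (bul (T (k 0)) (T (l 0)))) y" 0 x] by (simp add: nfB P)
  also have "\<dots> = Sw cm 1 (\<lambda>l. Sw cm 0 (\<lambda>k. \<phi> (bul (T (k 0)) (T (l 0))) * eps (l 1)) y) x"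
    by (simp add: nfB P mult_ac)
  also have "\<dots> = Sw cm 1 (\<lambda>l. Sw cm 0 (\<lambda>k. sw cm (\<lambda>c d. \<phi> (bul (T ((k(0 := sc (eps d) c)) 0)) (T (l 0))) * eps (l 1)) (k 0)) y) x"
    by (rule Sw_cong', rule counit_k(2)[symmetric]) (simp_all add: nfB P)
  also have "\<dots> = Sw cm 1 (\<lambda>l. Sw cm 1 (\<lambda>k. \<phi> (bul (bul (T (k 0)) (T (l 0))) (sc (eps (bul (l 1) (k 1))) one))) y) x"
    by (simp add: nfB P mult_ac)
  also have "\<dots> = Sw cm 1 (\<lambda>l. Sw cm 1 (\<lambda>k. \<phi> (bul (bul (T (k 0)) (T (l 0))) (sw cm (\<lambda>a b. bul a (T b)) (bul (l 1) (k 1))))) y) x"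
    by (simp add: antipode_r)
  also have "\<dots> = Sw cm 1 (\<lambda>l. Sw cm 2 (\<lambda>k. sw cm (\<lambda>c d. \<phi> (bul (T (k 0)) (bul (bul (T c) d) (bul (k 1) (T (bul (l 1) (k 2))))))) (l 0)) y) x"
    by (simp add: nfB P)
  also have "\<dots> = Sw cm 1 (\<lambda>l. Sw cm 2 (\<lambda>k. \<phi> (bul (T (k 0)) (bul (sc (eps (l 0)) one) (bul (k 1) (T (bul (l 1) (k 2))))))) y) x"
    by (rule Sw_cong', rule Sw_cong', rule antipode_l_ctx) (simp add: nfB P)
  also have "\<dots> = Sw cm 1 (\<lambda>l. Sw cm 1 (\<lambda>k. sw cm (\<lambda>c d. \<phi> (bul (bul (T c) d) (T (bul (l 1) (k 1)))) * eps (l 0)) (k 0)) y) x"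
    by (simp add: nfB P)
  also have "\<dots> = Sw cm 1 (\<lambda>l. Sw cm 1 (\<lambda>k. \<phi> (bul (sc (eps (k 0)) one) (T (bul (l 1) (k 1)))) * eps (l 0)) y) x"
    by (rule Sw_cong', rule Sw_cong', rule antipode_l_ctx) (simp add: nfB P)
  also have "\<dots> = Sw cm 1 (\<lambda>l. Sw cm 0 (\<lambda>k. sw cm (\<lambda>c d. \<phi> (T (bul (l 1) ((k(0 := sc (eps c) d)) 0))) * eps (l 0)) (k 0)) y) x"
    by (simp add: nfB P)
  also have "\<dots> = Sw cm 1 (\<lambda>l. Sw cm 0 (\<lambda>k. \<phi> (T (bul (l 1) (k 0))) * eps (l 0)) y) x"
    by (rule Sw_cong', rule counit_k(1)) (simp_all add: nfB P)
  also have "\<dots> = Sw cm 0 (\<lambda>l. sw cm (\<lambda>c d. Sw cm 0 (\<lambda>k. \<phi> (T (bul ((l(0 := sc (eps c) d)) 0) (k 0)))) y) (l 0)) x"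
    by (simp add: nfB P)
  also have "\<dots> = Sw cm 0 (\<lambda>l. Sw cm 0 (\<lambda>k. \<phi> (T (bul (l 0) (k 0)))) y) x"
    by (rule counit_k(1)) (simp_all add: nfB P)
  also have "\<dots> = \<phi> (T (bul x y))" by (simp add: Sw_0)
  finally show "\<phi> (T (bul x y)) = \<phi> (bul (T y) (T x))" by simp
qed


abbreviation plh' where "plh' \<equiv> plh mul cm S act beta"

lemma LR: "bul x y = sw cm (\<lambda>x1 x2. sw cm (\<lambda>y1 y2. bul (act x1 y1) (plh' x2 y2)) y) x"
proof (rule sep)
  fix \<phi> assume p: "LK \<phi>"
  note P = lin_facts[OF p]
  have "\<phi> (sw cm (\<lambda>x1 x2. sw cm (\<lambda>y1 y2. bul (act x1 y1) (plh' x2 y2)) y) x)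
     = Sw cm 0 (\<lambda>l. Sw cm 0 (\<lambda>k. \<phi> (sw cm (\<lambda>x1 x2. sw cm (\<lambda>y1 y2. bul (act x1 y1) (plh' x2 y2)) (k 0)) (l 0))) y) x"
    by (simp add: Sw_0)
  also have "\<dots> = Sw cm 1 (\<lambda>l. Sw cm 1 (\<lambda>k. sw cm (\<lambda>c d. \<phi> (bul (bul c (T d)) (bul (l 1) (k 1)))) (act (l 0) (k 0))) y) x"
    by (simp add: nfB P plh_def)
  also have "\<dots> = Sw cm 1 (\<lambda>l. Sw cm 1 (\<lambda>k. \<phi> (bul (sc (eps (act (l 0) (k 0))) one) (bul (l 1) (k 1)))) y) x"
    by (rule Sw_cong', rule Sw_cong', rule antipode_r_ctx) (simp add: nfB P)
  also have "\<dots> = Sw cm 1 (\<lambda>l. Sw cm 0 (\<lambda>k. sw cm (\<lambda>c d. \<phi> (bul (l 1) ((k(0 := sc (eps c) d)) 0)) * eps (l 0)) (k 0)) y) x"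
    by (simp add: nfB P)
  also have "\<dots> = Sw cm 1 (\<lambda>l. Sw cm 0 (\<lambda>k. \<phi> (bul (l 1) (k 0)) * eps (l 0)) y) x"
    by (rule Sw_cong', rule counit_k(1)) (simp_all add: nfB P)
  also have "\<dots> = Sw cm 0 (\<lambda>l. sw cm (\<lambda>c d. Sw cm 0 (\<lambda>k. \<phi> (bul ((l(0 := sc (eps c) d)) 0) (k 0))) y) (l 0)) x"
    by (simp add: nfB P)
  also have "\<dots> = Sw cm 0 (\<lambda>l. Sw cm 0 (\<lambda>k. \<phi> (bul (l 0) (k 0))) y) x"
    by (rule counit_k(1)) (simp_all add: nfB P)
  also have "\<dots> = \<phi> (bul x y)" by (simp add: Sw_0)
  finally show "\<phi> (bul x y) = \<phi> (sw cm (\<lambda>x1 x2. sw cm (\<lambda>y1 y2. bul (act x1 y1) (plh' x2 y2)) y) x)" by simp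
qed

lemma YD_cond: assumes f: "bilin sc (*) f"
  shows "bcoact bul cm T f (act a v)
       = sw3 cm (\<lambda>a1 a2 a3. bcoact bul cm T (\<lambda>h u. f (bul (bul a1 h) (T a3)) (act a2 u)) v) a"
proof -
  note F = bil_facts[OF f]
  have "bcoact bul cm T f (act a v) = Sw cm 0 (\<lambda>l. Sw cm 0 (\<lambda>k. bcoact bul cm T f (act (l 0) (k 0))) v) a"
    by (simp add: Sw_0)
  also have "\<dots> = Sw cm 2 (\<lambda>l. Sw cm 2 (\<lambda>k. f (bul (act (l 0) (k 0)) (T (act (l 2) (k 2)))) (act (l 1) (k 1))) v) a"
    by (simp add: nfB F bcoact_def sw3_def)
  also have "\<dots> = Sw cm 3 (\<lambda>l. Sw cm 2 (\<lambda>k. f (bul (act (l 0) (k 0)) (bul (T (act (l 2) (k 2))) (sc (eps (l 3)) one))) (act (l 1) (k 1))) v) a"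
    using counit_merge(1)[where n=2 and F="\<lambda>l. Sw cm 2 (\<lambda>k. f (bul (act (l 0) (k 0)) (T (act (l 2) (k 2)))) (act (l 1) (k 1))) v" and i=2 and x=a]
    by (simp add: nfB F)
  also have "\<dots> = Sw cm 3 (\<lambda>l. sw cm (\<lambda>c d. Sw cm 2 (\<lambda>k. f (bul (act (l 0) (k 0)) (bul (T (act (l 2) (k 2))) (bul c (T d)))) (act (l 1) (k 1))) v) (l 3)) a"
  proof -
    have h: "Sw cm 2 (\<lambda>k. f (bul (act (l 0) (k 0)) (bul (T (act (l 2) (k 2))) (sc (eps (l 3)) one))) (act (l 1) (k 1))) v
      = sw cm (\<lambda>c d. Sw cm 2 (\<lambda>k. f (bul (act (l 0) (k 0)) (bul (T (act (l 2) (k 2))) (bul c (T d)))) (act (l 1) (k 1))) v) (l 3)" for l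
      by (rule antipode_r_ctx[symmetric, where \<Psi>="\<lambda>u. Sw cm 2 (\<lambda>k. f (bul (act (l 0) (k 0)) (bul (T (act (l 2) (k 2))) u)) (act (l 1) (k 1))) v"])
        (simp add: nfB F)
    show ?thesis by (rule Sw_cong', rule h)
  qed
  also have "\<dots> = Sw cm 4 (\<lambda>l. Sw cm 2 (\<lambda>k. f (bul (act (l 0) (k 0)) (bul (T (act (l 2) (k 2))) (bul (l 3) (T (l 4))))) (act (l 1) (k 1))) v) a"
    by (simp add: nfB F)
  also have "\<dots> = Sw cm 4 (\<lambda>l. Sw cm 3 (\<lambda>k. f (bul (act (l 0) (k 0)) (bul (T (act (l 2) (k 2))) (bul (l 3) (bul (sc (eps (k 3)) one) (T (l 4)))))) (act (l 1) (k 1))) v) a"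
    using counit_merge_in(1)[where G="\<lambda>l k. f (bul (act (l 0) (k 0)) (bul (T (act (l 2) (k 2))) (bul (l 3) (T (l 4))))) (act (l 1) (k 1))"
        and m=2 and i=2 and n=4 and y=v and x=a]
    by (simp add: nfB F)
  also have "\<dots> = Sw cm 4 (\<lambda>l. Sw cm 3 (\<lambda>k. sw cm (\<lambda>c d. f (bul (act (l 0) (k 0)) (bul (T (act (l 2) (k 2))) (bul (l 3) (bul (bul c (T d)) (T (l 4)))))) (act (l 1) (k 1))) (k 3)) v) a"
  proof -
    have h: "f (bul (act (l 0) (k 0)) (bul (T (act (l 2) (k 2))) (bul (l 3) (bul (sc (eps (k 3)) one) (T (l 4)))))) (act (l 1) (k 1))
      = sw cm (\<lambda>c d. f (bul (act (l 0) (k 0)) (bul (T (act (l 2) (k 2))) (bul (l 3) (bul (bul c (T d)) (T (l 4)))))) (act (l 1) (k 1))) (k 3)" for l k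
      by (rule antipode_r_ctx[symmetric, where \<Psi>="\<lambda>u. f (bul (act (l 0) (k 0)) (bul (T (act (l 2) (k 2))) (bul (l 3) (bul u (T (l 4)))))) (act (l 1) (k 1))"])
        (simp add: nfB F)
    show ?thesis by (rule Sw_cong', rule Sw_cong', rule h)
  qed
  also have "\<dots> = Sw cm 2 (\<lambda>l. Sw cm 2 (\<lambda>k. sw cm (\<lambda>c d. sw cm (\<lambda>c' d'. f (bul (act (l 0) (k 0)) (bul (plh' d d') (bul (T (k 2)) (T (l 2))))) (act c c')) (k 1)) (l 1)) v) a"
    by (simp add: nfB F plh_def)
  also have "\<dots> = Sw cm 2 (\<lambda>l. Sw cm 2 (\<lambda>k. sw cm (\<lambda>c d. sw cm (\<lambda>c' d'. f (bul (act (l 0) (k 0)) (bul (plh' c c') (bul (T (k 2)) (T (l 2))))) (act d d')) (k 1)) (l 1)) v) a"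
  proof -
    have h: "sw cm (\<lambda>c d. sw cm (\<lambda>c' d'. f (bul (act (l 0) (k 0)) (bul (plh' d d') (bul (T (k 2)) (T (l 2))))) (act c c')) (k 1)) (l 1)
       = sw cm (\<lambda>c d. sw cm (\<lambda>c' d'. f (bul (act (l 0) (k 0)) (bul (plh' c c') (bul (T (k 2)) (T (l 2))))) (act d d')) (k 1)) (l 1)" for l k
      using P6b_k[of "\<lambda>p q. f (bul (act (l 0) (k 0)) (bul q (bul (T (k 2)) (T (l 2))))) p" "k 1" "l 1"]
      by (simp add: lin_simps F LH_bul1 LH_bul2)
    show ?thesis by (rule Sw_cong', rule Sw_cong', rule h)
  qed
  also have "\<dots> = Sw cm 2 (\<lambda>l. Sw cm 2 (\<lambda>k. f (bul (sw cm (\<lambda>x1 x2. sw cm (\<lambda>y1 y2. bul (act x1 y1) (plh' x2 y2)) (k 0)) (l 0)) (bul (T (k 2)) (T (l 2)))) (act (l 1) (k 1))) v) a"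
    by (simp add: nfB F plh_def)
  also have "\<dots> = Sw cm 2 (\<lambda>l. Sw cm 2 (\<lambda>k. f (bul (bul (l 0) (k 0)) (bul (T (k 2)) (T (l 2)))) (act (l 1) (k 1))) v) a"
    by (simp add: LR[symmetric])
  also have "\<dots> = sw3 cm (\<lambda>a1 a2 a3. bcoact bul cm T (\<lambda>h u. f (bul (bul a1 h) (T a3)) (act a2 u)) v) a"
  proof -
    have "Sw cm 0 (\<lambda>l. Sw cm 0 (\<lambda>k. sw3 cm (\<lambda>a1 a2 a3. bcoact bul cm T (\<lambda>h u. f (bul (bul a1 h) (T a3)) (act a2 u)) (k 0)) (l 0)) v) a
      = Sw cm 2 (\<lambda>l. Sw cm 2 (\<lambda>k. f (bul (bul (l 0) (k 0)) (bul (T (k 2)) (T (l 2)))) (act (l 1) (k 1))) v) a"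
      by (simp add: nfB F bcoact_def sw3_def)
    then show ?thesis by (simp add: Sw_0)
  qed
  finally show ?thesis .
qed


lemmas nfC = nfB T_antimult

lemma coact_coassoc: assumes f: "trilin sc (*) f"
  shows "bcoact bul cm T (\<lambda>h u. sw cm (\<lambda>h1 h2. f h1 h2 u) h) v
       = bcoact bul cm T (\<lambda>h u. bcoact bul cm T (\<lambda>h' u'. f h h' u') u) v"
proof -
  note F = tri_facts[OF f]
  have "Sw cm 0 (\<lambda>l. bcoact bul cm T (\<lambda>h u. sw cm (\<lambda>h1 h2. f h1 h2 u) h) (l 0)) v
      = Sw cm 0 (\<lambda>l. bcoact bul cm T (\<lambda>h u. bcoact bul cm T (\<lambda>h' u'. f h h' u') u) (l 0)) v"
    by (simp add: nfC F bcoact_def sw3_def)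
  then show ?thesis by (simp add: Sw_0)
qed

lemma coact_counit: "bcoact bul cm T (\<lambda>h u. sc (eps h) u) v = v"
proof (rule sep)
  fix \<phi> assume p: "LK \<phi>"
  note P = lin_facts[OF p]
  have "\<phi> (bcoact bul cm T (\<lambda>h u. sc (eps h) u) v) = Sw cm 0 (\<lambda>l. \<phi> (bcoact bul cm T (\<lambda>h u. sc (eps h) u) (l 0))) v"
    by (simp add: Sw_0)
  also have "\<dots> = Sw cm 2 (\<lambda>m. eps (m 0) * eps (m 2) * \<phi> (m 1)) v"
    by (simp add: nfC P bcoact_def sw3_def)
  also have "\<dots> = Sw cm 1 (\<lambda>m. eps (m 0) * \<phi> (m 1)) v"
    using counit_merge(1)[where n=1 and F="\<lambda>m. eps (m 0) * \<phi> (m 1)" and i=1 and x=v]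
    by (simp add: nfC P)
  also have "\<dots> = Sw cm 0 (\<lambda>m. \<phi> (m 0)) v"
    using counit_merge(2)[where n=0 and F="\<lambda>m. \<phi> (m 0)" and i=0 and x=v]
    by (simp add: nfC P)
  also have "\<dots> = \<phi> v" by (simp add: Sw_0)
  finally show "\<phi> (bcoact bul cm T (\<lambda>h u. sc (eps h) u) v) = \<phi> v" .
qed

lemma coact_one: assumes f: "bilin sc (*) f" shows "bcoact bul cm T f one = f one one"
  by (simp add: bcoact_def sw3_def cm_one_simp lin_simps LK_sw_arg bil_facts[OF f] LH_bul1 LH_bul2 LH_T T_one bul_one_l)

lemma coact_eps: "bcoact bul cm T (\<lambda>h w. sc (eps w) h) v = sc (eps v) one"
proof (rule sep)
  fix \<phi> assume p: "LK \<phi>"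
  note P = lin_facts[OF p]
  have "\<phi> (bcoact bul cm T (\<lambda>h w. sc (eps w) h) v) = Sw cm 0 (\<lambda>l. \<phi> (bcoact bul cm T (\<lambda>h w. sc (eps w) h) (l 0))) v"
    by (simp add: Sw_0)
  also have "\<dots> = Sw cm 2 (\<lambda>m. eps (m 1) * \<phi> (bul (m 0) (T (m 2)))) v"
    by (simp add: nfC P bcoact_def sw3_def)
  also have "\<dots> = Sw cm 1 (\<lambda>m. \<phi> (bul (m 0) (T (m 1)))) v"
    using counit_merge(1)[where n=1 and F="\<lambda>m. \<phi> (bul (m 0) (T (m 1)))" and i=0 and x=v]
    by (simp add: nfC P)
  also have "\<dots> = Sw cm 0 (\<lambda>l. sw cm (\<lambda>c d. \<phi> (bul c (T d))) (l 0)) v"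
    by (simp add: nfC P)
  also have "\<dots> = \<phi> (sc (eps v) one)"
    by (simp add: Sw_0 antipode_r_ctx P lin_simps LH_bul1 LH_bul2 LH_T)
  finally show "\<phi> (bcoact bul cm T (\<lambda>h w. sc (eps w) h) v) = \<phi> (sc (eps v) one)" .
qed

lemma comult_comod: assumes f: "trilin sc (*) f"
  shows "bcoact bul cm T (\<lambda>h w. sw cm (\<lambda>w1 w2. f h w1 w2) w) v
       = sw cm (\<lambda>v1 v2. bcoact bul cm T (\<lambda>h u. bcoact bul cm T (\<lambda>h' u'. f (bul h h') u u') v2) v1) v"
proof -
  note F = tri_facts[OF f]
  have "bcoact bul cm T (\<lambda>h w. sw cm (\<lambda>w1 w2. f h w1 w2) w) v = Sw cm 0 (\<lambda>l. bcoact bul cm T (\<lambda>h w. sw cm (\<lambda>w1 w2. f h w1 w2) w) (l 0)) v"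
    by (simp add: Sw_0)
  also have "\<dots> = Sw cm 3 (\<lambda>m. f (bul (m 0) (T (m 3))) (m 1) (m 2)) v"
    by (simp add: nfC F bcoact_def sw3_def)
  also have "\<dots> = Sw cm 4 (\<lambda>m. f (bul (m 0) (bul (sc (eps (m 2)) one) (T (m 4)))) (m 1) (m 3)) v"
    using counit_merge(1)[where n=3 and F="\<lambda>m. f (bul (m 0) (T (m 3))) (m 1) (m 2)" and i=1 and x=v]
    by (simp add: nfC F)
  also have "\<dots> = Sw cm 4 (\<lambda>m. sw cm (\<lambda>c d. f (bul (m 0) (bul (bul (T c) d) (T (m 4)))) (m 1) (m 3)) (m 2)) v"
  proof -
    have h: "f (bul (m 0) (bul (sc (eps (m 2)) one) (T (m 4)))) (m 1) (m 3)
      = sw cm (\<lambda>c d. f (bul (m 0) (bul (bul (T c) d) (T (m 4)))) (m 1) (m 3)) (m 2)" for m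
      by (rule antipode_l_ctx[symmetric, where \<Psi>="\<lambda>u. f (bul (m 0) (bul u (T (m 4)))) (m 1) (m 3)"])
        (simp add: nfC F)
    show ?thesis by (rule Sw_cong', rule h)
  qed
  also have "\<dots> = sw cm (\<lambda>v1 v2. bcoact bul cm T (\<lambda>h u. bcoact bul cm T (\<lambda>h' u'. f (bul h h') u u') v2) v1) v"
  proof -
    have "Sw cm 0 (\<lambda>l. sw cm (\<lambda>v1 v2. bcoact bul cm T (\<lambda>h u. bcoact bul cm T (\<lambda>h' u'. f (bul h h') u u') v2) v1) (l 0)) v
       = Sw cm 4 (\<lambda>m. sw cm (\<lambda>c d. f (bul (m 0) (bul (bul (T c) d) (T (m 4)))) (m 1) (m 3)) (m 2)) v"
      by (simp add: nfC F bcoact_def sw3_def)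
    then show ?thesis by (simp add: Sw_0)
  qed
  finally show ?thesis .
qed

lemma bcoact_lin: assumes f: "bilin sc (*) f" shows "LK (\<lambda>v. bcoact bul cm T f v)"
  by (simp add: bcoact_def sw3_def lin_simps LK_sw_arg bil_facts[OF f] LH_bul1 LH_bul2 LH_T)


lemma P2': "act (bul x y) z = act x (act y z)"
  by (simp add: P2 pbul_def)

lemma braided: assumes f: "bilin sc (*) f"
  shows "sw cm f (mul b c) = sw cm (\<lambda>b1 b2. sw cm (\<lambda>c1 c2.
               bcoact bul cm T (\<lambda>h u. f (mul b1 (act h c1)) (mul u c2)) b2) c) b"
proof -
  note F = bil_facts[OF f]
  have "Sw cm 0 (\<lambda>l. Sw cm 0 (\<lambda>k. sw cm f (mul (l 0) (k 0))) c) b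
      = Sw cm 0 (\<lambda>l. Sw cm 0 (\<lambda>k. sw cm (\<lambda>b1 b2. sw cm (\<lambda>c1 c2.
               bcoact bul cm T (\<lambda>h u. f (mul b1 (act h c1)) (mul u c2)) b2) (k 0)) (l 0)) c) b"
    by (simp add: nf2 F P5_k[OF f] P2' T_act sw4_def sw3_def bcoact_def LH_bul1 LH_bul2 LH_T pull_bul1 pull_bul2 pull_T)
  then show ?thesis by (simp add: Sw_0)
qed

lemma brace3: "bul a (mul b c) = sw3 cm (\<lambda>a1 a2 a3. mul (mul (bul a1 b) (S a2)) (bul a3 c)) a"
proof (rule sep)
  fix \<phi> assume p: "LK \<phi>"
  note P = lin_facts[OF p]
  have "\<phi> (sw3 cm (\<lambda>a1 a2 a3. mul (mul (bul a1 b) (S a2)) (bul a3 c)) a)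
      = Sw cm 0 (\<lambda>l. \<phi> (sw3 cm (\<lambda>a1 a2 a3. mul (mul (bul a1 b) (S a2)) (bul a3 c)) (l 0))) a"
    by (simp add: Sw_0)
  also have "\<dots> = Sw cm 3 (\<lambda>l. sw cm (\<lambda>c' d. \<phi> (mul (l 0) (mul (act (l 1) b) (mul (mul (S c') d) (act (l 3) c))))) (l 2)) a"
    by (simp add: nf2 P pbul_def sw3_def)
  also have "\<dots> = Sw cm 3 (\<lambda>l. \<phi> (mul (l 0) (mul (act (l 1) b) (mul (sc (eps (l 2)) one) (act (l 3) c))))) a"
    by (rule Sw_cong', rule antip_l_ctx) (simp add: nf2 P)
  also have "\<dots> = Sw cm 2 (\<lambda>l. \<phi> (mul (l 0) (mul (act (l 1) b) (act (l 2) c)))) a"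
    using counit_merge(1)[where n=2 and F="\<lambda>l. \<phi> (mul (l 0) (mul (act (l 1) b) (act (l 2) c)))" and i=1 and x=a]
    by (simp add: nf2 P)
  also have "\<dots> = Sw cm 0 (\<lambda>l. \<phi> (bul (l 0) (mul b c))) a"
    by (simp add: nf2 P pbul_def P1)
  also have "\<dots> = \<phi> (bul a (mul b c))" by (simp add: Sw_0)
  finally show "\<phi> (bul a (mul b c)) = \<phi> (sw3 cm (\<lambda>a1 a2 a3. mul (mul (bul a1 b) (S a2)) (bul a3 c)) a)" by simp
qed

lemma act_act_T_ctx: "LK \<Psi> \<Longrightarrow> sw cm (\<lambda>c d. \<Psi> (act c (act (T d) y))) z = \<Psi> (sc (eps z) y)"
  by (metis (no_types) LK_apply_sw act_act_T)

lemma MB: "mul x y = sw cm (\<lambda>x1 x2. bul x1 (act (T x2) y)) x"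
proof (rule sep)
  fix \<phi> assume p: "LK \<phi>"
  note P = lin_facts[OF p]
  have "\<phi> (sw cm (\<lambda>x1 x2. bul x1 (act (T x2) y)) x) = Sw cm 0 (\<lambda>l. \<phi> (sw cm (\<lambda>x1 x2. bul x1 (act (T x2) y)) (l 0))) x"
    by (simp add: Sw_0)
  also have "\<dots> = Sw cm 1 (\<lambda>l. sw cm (\<lambda>c d. \<phi> (mul (l 0) (act c (act (T d) y)))) (l 1)) x"
    by (simp add: nf2 P pbul_def LH_T)
  also have "\<dots> = Sw cm 1 (\<lambda>l. \<phi> (mul (l 0) (sc (eps (l 1)) y))) x"
    by (rule Sw_cong', rule act_act_T_ctx) (simp add: nf2 P LH_T)
  also have "\<dots> = Sw cm 0 (\<lambda>l. \<phi> (mul (l 0) y)) x"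
    using counit_merge(1)[where n=0 and F="\<lambda>l. \<phi> (mul (l 0) y)" and i=0 and x=x]
    by (simp add: nf2 P LH_T)
  also have "\<dots> = \<phi> (mul x y)" by (simp add: Sw_0)
  finally show "\<phi> (mul x y) = \<phi> (sw cm (\<lambda>x1 x2. bul x1 (act (T x2) y)) x)" by simp
qed

lemma mul_comod: assumes f: "bilin sc (*) f"
  shows "bcoact bul cm T f (mul b c) = bcoact bul cm T (\<lambda>h u. bcoact bul cm T (\<lambda>h' u'. f (bul h h') (mul u u')) c) b"
proof -
  note F = bil_facts[OF f]
  have "bcoact bul cm T f (mul b c) = Sw cm 0 (\<lambda>l. Sw cm 0 (\<lambda>k. bcoact bul cm T f (mul (l 0) (k 0))) c) b"
    by (simp add: Sw_0)
  also have "\<dots> = Sw cm 3 (\<lambda>l. Sw cm 0 (\<lambda>k. bcoact bul cm T (\<lambda>h u. f (bul (l 0) (bul h (T (l 2)))) (bul (l 1) u)) (act (T (l 3)) (k 0))) c) b"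
    by (simp add: nfC F MB bcoact_def sw3_def)
  also have "\<dots> = Sw cm 3 (\<lambda>l. Sw cm 0 (\<lambda>k. sw3 cm (\<lambda>a0 a1 a2. bcoact bul cm T (\<lambda>h u. f (bul (l 0) (bul (bul (bul a0 h) (T a2)) (T (l 2)))) (bul (l 1) (act a1 u))) (k 0)) (T (l 3))) c) b"
  proof -
    have h: "bcoact bul cm T (\<lambda>h u. f (bul (l 0) (bul h (T (l 2)))) (bul (l 1) u)) (act (T (l 3)) (k 0))
      = sw3 cm (\<lambda>a0 a1 a2. bcoact bul cm T (\<lambda>h u. f (bul (l 0) (bul (bul (bul a0 h) (T a2)) (T (l 2)))) (bul (l 1) (act a1 u))) (k 0)) (T (l 3))" for l k
      by (rule YD_cond) (simp add: lin_simps F LH_bul1 LH_bul2 LH_T)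
    show ?thesis by (rule Sw_cong', rule Sw_cong', rule h)
  qed
  also have "\<dots> = Sw cm 4 (\<lambda>l. Sw cm 2 (\<lambda>k. sw cm (\<lambda>c d. f (bul (l 0) (bul (T (l 4)) (bul (k 0) (bul (T (k 2)) (bul (T c) d))))) (bul (l 1) (act (T (l 3)) (k 1)))) (T (l 2))) c) b"
    by (simp add: nfC F bcoact_def sw3_def)
  also have "\<dots> = Sw cm 4 (\<lambda>l. Sw cm 2 (\<lambda>k. f (bul (l 0) (bul (T (l 4)) (bul (k 0) (bul (T (k 2)) (sc (eps (T (l 2))) one))))) (bul (l 1) (act (T (l 3)) (k 1)))) c) b"
  proof -
    have h: "sw cm (\<lambda>c d. f (bul (l 0) (bul (T (l 4)) (bul (k 0) (bul (T (k 2)) (bul (T c) d))))) (bul (l 1) (act (T (l 3)) (k 1)))) (T (l 2))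
       = f (bul (l 0) (bul (T (l 4)) (bul (k 0) (bul (T (k 2)) (sc (eps (T (l 2))) one))))) (bul (l 1) (act (T (l 3)) (k 1)))" for l k
      by (rule antipode_l_ctx[where \<Psi>="\<lambda>u. f (bul (l 0) (bul (T (l 4)) (bul (k 0) (bul (T (k 2)) u)))) (bul (l 1) (act (T (l 3)) (k 1)))"])
        (simp add: lin_simps F LH_bul1 LH_bul2 LH_T)
    show ?thesis by (rule Sw_cong', rule Sw_cong', rule h)
  qed
  also have "\<dots> = Sw cm 3 (\<lambda>l. Sw cm 2 (\<lambda>k. f (bul (l 0) (bul (T (l 3)) (bul (k 0) (T (k 2))))) (bul (l 1) (act (T (l 2)) (k 1)))) c) b"
    using counit_merge(1)[where n=3 and F="\<lambda>l. Sw cm 2 (\<lambda>k. f (bul (l 0) (bul (T (l 3)) (bul (k 0) (T (k 2))))) (bul (l 1) (act (T (l 2)) (k 1)))) c" and i=1 and x=b]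
    by (simp add: nfC F)
  also have "\<dots> = bcoact bul cm T (\<lambda>h u. bcoact bul cm T (\<lambda>h' u'. f (bul h h') (mul u u')) c) b"
  proof -
    have "Sw cm 0 (\<lambda>l. Sw cm 0 (\<lambda>k. bcoact bul cm T (\<lambda>h u. bcoact bul cm T (\<lambda>h' u'. f (bul h h') (mul u u')) (k 0)) (l 0)) c) b
      = Sw cm 3 (\<lambda>l. Sw cm 2 (\<lambda>k. f (bul (l 0) (bul (T (l 3)) (bul (k 0) (T (k 2))))) (bul (l 1) (act (T (l 2)) (k 1)))) c) b"
      by (simp add: nfC F MB bcoact_def sw3_def)
    then show ?thesis by (simp add: Sw_0)
  qed
  finally show ?thesis .
qed

lemma blh_eq: "blh mul bul cm S T a b = plh' a b"
  by (simp add: blh_def plh_def bact_eq)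


lemma ra_eq: "bact mul bul cm S = act"
  by (intro ext) (rule bact_eq)

lemma alg_bul: "alg sc bul one"
  using vs bul_bil bul_assoc bul_one_l bul_one_r by (simp add: alg_def)

lemma coalg_H: "coalg sc cm eps" using Y by (simp add: ydph_def)
lemma alg_H: "alg sc mul one" using Y by (simp add: ydph_def)

lemma bcoact_add: "bilin sc (*) f \<Longrightarrow> bcoact bul cm T f (x + y) = bcoact bul cm T f x + bcoact bul cm T f y"
  using bcoact_lin by (simp add: LK_iff)
lemma bcoact_scale: "bilin sc (*) f \<Longrightarrow> bcoact bul cm T f (sc c x) = c * bcoact bul cm T f x"
  using bcoact_lin by (simp add: LK_iff)

lemma cond2: "bilin sc (*) f \<Longrightarrow>
        sw cm (\<lambda>a1 a2. sw cm (\<lambda>b1 b2. f (act a1 b1) (blh mul bul cm S T a2 b2)) b) a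
      = sw cm (\<lambda>a1 a2. sw cm (\<lambda>b1 b2. f (act a2 b2) (blh mul bul cm S T a1 b1)) b) a"
  unfolding blh_eq by (rule P6b_k)

theorem brace: "yd_brace sc mul bul one cm eps S T"
  unfolding yd_brace_def Let_def ra_eq
  apply (intro conjI allI impI)
  apply (simp_all add: alg_bul coalg_H alg_H eps_bul cm_one_k bul_comult T_lin antipode_r antipode_l act_bil act_one_l P2'
    bcoact_add bcoact_scale coact_coassoc coact_counit YD_cond P1 mul_comod act_one_r coact_one act_coalg_k comult_comod
    eps_act coact_eps eps_mul braided S_lin antip_r antip_l cond2 brace3)
  done

end

theorem corollary3:
  fixes sc :: "'k::field \<Rightarrow> 'h::ab_group_add \<Rightarrow> 'h"
    and mul act beta :: "'h \<Rightarrow> 'h \<Rightarrow> 'h" and one :: 'h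
    and cm :: "'h \<Rightarrow> ('h \<times> 'h) list" and eps :: "'h \<Rightarrow> 'k" and S :: "'h \<Rightarrow> 'h"
    and sc' :: "'k \<Rightarrow> 'g::ab_group_add \<Rightarrow> 'g"
    and mul' act' beta' :: "'g \<Rightarrow> 'g \<Rightarrow> 'g" and one' :: 'g
    and cm' :: "'g \<Rightarrow> ('g \<times> 'g) list" and eps' :: "'g \<Rightarrow> 'k" and S' :: "'g \<Rightarrow> 'g"
    and g :: "'h \<Rightarrow> 'g"
  shows "(ydph sc mul one cm eps S act beta \<longrightarrow>
            yd_brace sc mul (pbul mul cm act) one cm eps S (pS cm S beta))
       \<and> (ydph sc mul one cm eps S act beta \<and> ydph sc' mul' one' cm' eps' S' act' beta'
            \<and> ydph_mor sc mul one cm eps act sc' mul' one' cm' eps' act' g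
          \<longrightarrow> brace_mor sc mul (pbul mul cm act) one cm eps
                        sc' mul' (pbul mul' cm' act') one' cm' eps' g)"
proof (intro conjI impI)
  assume "ydph sc mul one cm eps S act beta"
  then interpret H: YD sc mul one cm eps S act beta by (rule YD.intro)
  show "yd_brace sc mul (pbul mul cm act) one cm eps S (pS cm S beta)" by (rule H.brace)
next
  assume A: "ydph sc mul one cm eps S act beta \<and> ydph sc' mul' one' cm' eps' S' act' beta'
            \<and> ydph_mor sc mul one cm eps act sc' mul' one' cm' eps' act' g"
  interpret H1: YD sc mul one cm eps S act beta using A by (simp add: YD.intro)
  interpret H2: YD sc' mul' one' cm' eps' S' act' beta' using A by (simp add: YD.intro)
  have M: "ydph_mor sc mul one cm eps act sc' mul' one' cm' eps' act' g" using A by simp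
  have glin: "Vector_Spaces.linear sc sc' g" using M by (simp add: ydph_mor_def)
  have gmul: "g (mul x y) = mul' (g x) (g y)" for x y using M by (simp add: ydph_mor_def)
  have gone: "g one = one'" using M by (simp add: ydph_mor_def)
  have gcm: "bilin sc' (*) f \<Longrightarrow> sw cm' f (g x) = sw cm (\<lambda>a b. f (g a) (g b)) x" for f x
    using M by (simp add: ydph_mor_def)
  have geps: "eps' (g x) = eps x" for x using M by (simp add: ydph_mor_def)
  have gact: "g (act x y) = act' (g x) (g y)" for x y using M by (simp add: ydph_mor_def)
  have gsum: "g (sw cm G x) = sw cm (\<lambda>a b. g (G a b)) x" for G x
    by (simp add: sw_def linear_sum_list[OF glin] split_def)
  have gcmH: "sw cm' F (g x) = sw cm (\<lambda>a b. F (g a) (g b)) x" if F: "bilin sc' sc' F" for F x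
  proof (rule H2.sep)
    fix \<phi> assume p: "Vector_Spaces.linear sc' (*) \<phi>"
    have b: "bilin sc' (*) (\<lambda>a b. \<phi> (F a b))"
      using F p unfolding bilin_def H2.LH_iff H2.LK_iff by auto
    have "\<phi> (sw cm' F (g x)) = sw cm' (\<lambda>a b. \<phi> (F a b)) (g x)" by (rule H2.LK_apply_sw[OF p])
    also have "\<dots> = sw cm (\<lambda>a b. \<phi> (F (g a) (g b))) x" by (rule gcm[OF b])
    also have "\<dots> = \<phi> (sw cm (\<lambda>a b. F (g a) (g b)) x)"
      by (simp add: sw_def linear_sum_list[OF p] split_def)
    finally show "\<phi> (sw cm' F (g x)) = \<phi> (sw cm (\<lambda>a b. F (g a) (g b)) x)" .
  qed
  have gbul: "g (pbul mul cm act x y) = pbul mul' cm' act' (g x) (g y)" for x y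
  proof -
    have "g (pbul mul cm act x y) = sw cm (\<lambda>a b. mul' (g a) (act' (g b) (g y))) x"
      by (simp add: pbul_def gsum gmul gact)
    also have "\<dots> = pbul mul' cm' act' (g x) (g y)"
      unfolding pbul_def by (rule gcmH[symmetric]) (simp add: H2.lin_simps)
    finally show ?thesis .
  qed
  show "brace_mor sc mul (pbul mul cm act) one cm eps sc' mul' (pbul mul' cm' act') one' cm' eps' g"
    unfolding brace_mor_def using glin gbul gone gcm geps gmul by blast
qed


end
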